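(* Let $\mathcal{P}$ be an $n$-dimensional convex polytope in $\mathbb{R}^n$ and let $\mathbf{s}\in\mathbb{R}^n$, $\mathbf{s}\neq\mathbf{0}$. For $\lambda>0$ let $$\varphi_{\mathcal{P},\mathbf{s}}(\lambda)=\int_{\mathcal{P}} e^{-i\frac{1}{\lambda}\mathbf{s}\cdot\mathbf{x}}\,d\mathbf{x}.$$ Then, as $\lambda\to 0^+$, $$\varphi_{\mathcal{P},\mathbf{s}}(\lambda)=\frac{i}{\|\mathbf{s}\|}\left(\sum_{F\in\mathcal{F}_{\mathcal{P}}:\ \mathbf{s}\perp F}\operatorname{sgn}_{\mathcal{P}}(F,\mathbf{s})\, A_F\, e^{-i\frac{1}{\lambda}\mathbf{s}\cdot\mathbf{p}_F}\right)\lambda+O(\lambda^2),$$ where the sum is empty (equal to $0$) if $\mathbf{s}$ is orthogonal to no facet of $\mathcal{P}$.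
   Context: $\mathbf{s}\cdot\mathbf{x}$ is the standard scalar product on $\mathbb{R}^n$ and $\|\cdot\|$ the Euclidean norm. $\mathcal{F}_{\mathcal{P}}$ is the set of facets ($(n-1)$-dimensional faces) of $\mathcal{P}$. For a facet $F$, $\mathbf{s}\perp F$ means $\mathbf{s}$ is orthogonal to $F$ (i.e. to the hyperplane containing $F$); $A_F>0$ is the $(n-1)$-dimensional surface measure of $F$; $\mathbf{p}_F$ is an arbitrary point of the affine hyperplane containing $F$ (when $\mathbf{s}\perp F$ the value $\mathbf{s}\cdot\mathbf{p}_F$ does not depend on this choice). For $\mathbf{s}\perp F$, $\operatorname{sgn}_{\mathcal{P}}(F,\mathbf{s})=1$ if $\mathbf{s}$ is directed to the outside of $\mathcal{P}$ (i.e. is a positive multiple of the outward normal of $F$) and $-1$ otherwise. *)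

theory Defs
  imports "HOL-Analysis.Analysis" "HOL-Library.Landau_Symbols"
begin

definition orth_to :: "'a::euclidean_space \<Rightarrow> 'a set \<Rightarrow> bool" where
  "orth_to s F \<longleftrightarrow> (\<forall>x\<in>F. \<forall>y\<in>F. s \<bullet> (x - y) = 0)"

definition facet_point :: "'a::euclidean_space set \<Rightarrow> 'a" where
  "facet_point F = (SOME p. p \<in> F)"

text \<open>(n-1)-dimensional surface measure of a flat set F with unit normal u:
  the n-dimensional volume of the right prism of height 1 over F.\<close>
definition facet_area :: "'a::euclidean_space \<Rightarrow> 'a set \<Rightarrow> real" where
  "facet_area u F = measure lebesgue {x + t *\<^sub>R u | x t. x \<in> F \<and> t \<in> {0..1}}"

text \<open>sgn_P(F,s): 1 if s points to the outside of P (P lies in the halfspace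
  s.x <= s.p_F), -1 otherwise.\<close>
definition facet_sgn :: "'a::euclidean_space set \<Rightarrow> 'a set \<Rightarrow> 'a \<Rightarrow> real" where
  "facet_sgn P F s = (if \<forall>x\<in>P. s \<bullet> x \<le> s \<bullet> facet_point F then 1 else -1)"

definition phi :: "'a::euclidean_space set \<Rightarrow> 'a \<Rightarrow> real \<Rightarrow> complex" where
  "phi P s l = integral P (\<lambda>x. exp (- \<i> * complex_of_real ((1 / l) * (s \<bullet> x))))"

end

theory Submission
  imports Defs
begin

definition slab :: "'a::euclidean_space \<Rightarrow> 'a set" where
  "slab u = {x. \<bar>u \<bullet> x\<bar> \<le> 1/2}"

lemma closed_slab: "closed (slab u)"
  unfolding slab_def by (intro closed_Collect_le continuous_intros)

lemma slab_borel[measurable]: "slab u \<in> sets borel"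
  by (simp add: closed_slab borel_closed)

lemma lborel_integral_translate:
  fixes f :: "'a::euclidean_space \<Rightarrow> 'b::{banach,second_countable_topology}"
  assumes "f \<in> borel_measurable borel"
  shows "(\<integral>x. f (x + c) \<partial>lborel) = (\<integral>x. f x \<partial>lborel)"
proof -
  have "(\<integral>x. f x \<partial>lborel) = (\<integral>x. f x \<partial>(distr lborel borel ((+) c)))"
    by (simp add: lborel_distr_plus)
  also have "\<dots> = (\<integral>x. f (c + x) \<partial>lborel)"
    by (rule integral_distr) (use assms in auto)
  finally show ?thesis by (simp add: add.commute)
qed

lemma lborel_nn_integral_translate:
  fixes f :: "'a::euclidean_space \<Rightarrow> ennreal"
  assumes "f \<in> borel_measurable borel"
  shows "(\<integral>\<^sup>+x. f (x + c) \<partial>lborel) = (\<integral>\<^sup>+x. f x \<partial>lborel)"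
proof -
  have "(\<integral>\<^sup>+x. f x \<partial>lborel) = (\<integral>\<^sup>+x. f x \<partial>(distr lborel borel ((+) c)))"
    by (simp add: lborel_distr_plus)
  also have "\<dots> = (\<integral>\<^sup>+x. f (c + x) \<partial>lborel)"
    by (rule nn_integral_distr) (use assms in auto)
  finally show ?thesis by (simp add: add.commute)
qed

lemma slab_line_indicator:
  assumes u: "norm u = 1"
  shows "indicator (slab u) (z - t *\<^sub>R u) = (indicator {u \<bullet> z - 1/2 .. u \<bullet> z + 1/2} t :: 'b::zero_neq_one)"
proof -
  have "u \<bullet> u = 1" using u by (simp add: norm_eq_1)
  then have e: "u \<bullet> (z - t *\<^sub>R u) = u \<bullet> z - t" by (simp add: inner_diff_right)
  have "(z - t *\<^sub>R u \<in> slab u) \<longleftrightarrow> t \<in> {u \<bullet> z - 1/2 .. u \<bullet> z + 1/2}"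
    unfolding slab_def mem_Collect_eq e atLeastAtMost_iff abs_le_iff by linarith
  then show ?thesis by (simp add: indicator_def)
qed

lemma slab_identity:
  fixes g :: "'a::euclidean_space \<Rightarrow> 'b::{banach,second_countable_topology}" and u :: 'a
  assumes g: "integrable lborel g" and u: "norm u = 1"
  shows "(\<integral>z. g z \<partial>lborel) = (\<integral>x. indicator (slab u) x *\<^sub>R (\<integral>t. g (x + t *\<^sub>R u) \<partial>lborel) \<partial>lborel)"
proof -
  have gm[measurable]: "g \<in> borel_measurable borel"
    using g by (simp add: measurable_lborel1[symmetric])
  define k where "k = (\<lambda>(z::'a, t::real). indicator (slab u) (z - t *\<^sub>R u) *\<^sub>R g z)"
  define h where "h = (\<lambda>(x::'a, t::real). indicator (slab u) x *\<^sub>R g (x + t *\<^sub>R u))"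
  have km[measurable]: "k \<in> borel_measurable (lborel \<Otimes>\<^sub>M lborel)"
    unfolding k_def by measurable
  have hm[measurable]: "h \<in> borel_measurable (lborel \<Otimes>\<^sub>M lborel)"
    unfolding h_def by measurable
  have one: "(\<integral>\<^sup>+t. indicator (slab u) (z - t *\<^sub>R u) \<partial>lborel) = 1" for z
    by (simp add: slab_line_indicator[OF u])
  have nk: "(\<integral>\<^sup>+p. norm (k p) \<partial>(lborel \<Otimes>\<^sub>M lborel)) = (\<integral>\<^sup>+z. norm (g z) \<partial>lborel)"
  proof -
    have "(\<integral>\<^sup>+p. norm (k p) \<partial>(lborel \<Otimes>\<^sub>M lborel)) = (\<integral>\<^sup>+z. \<integral>\<^sup>+t. norm (k (z,t)) \<partial>lborel \<partial>lborel)"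
      by (rule lborel.nn_integral_fst[symmetric]) measurable
    also have "\<dots> = (\<integral>\<^sup>+z. \<integral>\<^sup>+t. ennreal (norm (g z)) * indicator (slab u) (z - t *\<^sub>R u) \<partial>lborel \<partial>lborel)"
      by (intro nn_integral_cong) (auto simp: k_def indicator_def)
    also have "\<dots> = (\<integral>\<^sup>+z. norm (g z) \<partial>lborel)"
      by (subst nn_integral_cmult) (auto simp: one)
    finally show ?thesis .
  qed
  have fin: "(\<integral>\<^sup>+z. norm (g z) \<partial>lborel) < \<infinity>"
    using g by (simp add: integrable_iff_bounded)
  have ki: "integrable (lborel \<Otimes>\<^sub>M lborel) k"
    using nk fin by (simp add: integrable_iff_bounded)
  have nh: "(\<integral>\<^sup>+p. norm (h p) \<partial>(lborel \<Otimes>\<^sub>M lborel)) = (\<integral>\<^sup>+p. norm (k p) \<partial>(lborel \<Otimes>\<^sub>M lborel))"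
  proof -
    have "(\<integral>\<^sup>+p. norm (h p) \<partial>(lborel \<Otimes>\<^sub>M lborel)) = (\<integral>\<^sup>+t. \<integral>\<^sup>+x. norm (h (x,t)) \<partial>lborel \<partial>lborel)"
      by (rule lborel_pair.nn_integral_snd[symmetric]) measurable
    also have "\<dots> = (\<integral>\<^sup>+t. \<integral>\<^sup>+x. norm (k (x + t *\<^sub>R u,t)) \<partial>lborel \<partial>lborel)"
      by (intro nn_integral_cong) (auto simp: k_def h_def)
    also have "\<dots> = (\<integral>\<^sup>+t. \<integral>\<^sup>+z. norm (k (z,t)) \<partial>lborel \<partial>lborel)"
      by (intro nn_integral_cong lborel_nn_integral_translate[where f = "\<lambda>z. ennreal (norm (k (z,_)))"]) measurable
    also have "\<dots> = (\<integral>\<^sup>+p. norm (k p) \<partial>(lborel \<Otimes>\<^sub>M lborel))"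
      by (rule lborel_pair.nn_integral_snd) measurable
    finally show ?thesis .
  qed
  have hi: "integrable (lborel \<Otimes>\<^sub>M lborel) h"
    using nh nk fin by (simp add: integrable_iff_bounded)
  have "(\<integral>x. indicator (slab u) x *\<^sub>R (\<integral>t. g (x + t *\<^sub>R u) \<partial>lborel) \<partial>lborel)
      = (\<integral>x. (\<integral>t. h (x,t) \<partial>lborel) \<partial>lborel)"
    by (simp add: h_def)
  also have "\<dots> = (\<integral>t. (\<integral>x. h (x,t) \<partial>lborel) \<partial>lborel)"
    by (rule lborel_pair.Fubini_integral[symmetric]) (use hi in \<open>simp add: case_prod_beta'\<close>)
  also have "\<dots> = (\<integral>t. (\<integral>z. k (z,t) \<partial>lborel) \<partial>lborel)"
  proof -
    have tr: "(\<integral>x. h (x,t) \<partial>lborel) = (\<integral>z. k (z,t) \<partial>lborel)" for t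
    proof -
      have "(\<integral>x. h (x,t) \<partial>lborel) = (\<integral>x. k (x + t *\<^sub>R u, t) \<partial>lborel)"
        by (simp add: h_def k_def)
      also have "\<dots> = (\<integral>z. k (z,t) \<partial>lborel)"
        by (rule lborel_integral_translate) measurable
      finally show ?thesis .
    qed
    show ?thesis by (simp only: tr)
  qed
  also have "\<dots> = (\<integral>z. (\<integral>t. k (z,t) \<partial>lborel) \<partial>lborel)"
    by (rule lborel_pair.Fubini_integral) (use ki in \<open>simp add: case_prod_beta'\<close>)
  also have "\<dots> = (\<integral>z. g z \<partial>lborel)"
  proof (intro Bochner_Integration.integral_cong refl)
    fix z
    have "(\<integral>t. k (z,t) \<partial>lborel) = (\<integral>t. indicator {u \<bullet> z - 1/2 .. u \<bullet> z + 1/2} t *\<^sub>R g z \<partial>lborel)"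
      by (simp add: k_def slab_line_indicator[OF u])
    also have "\<dots> = g z"
      by simp
    finally show "(\<integral>t. k (z,t) \<partial>lborel) = g z" .
  qed
  finally show ?thesis ..
qed

lemma my_norm_bound:
  fixes f :: "'c \<Rightarrow> 'b::{banach,second_countable_topology}"
  assumes "integrable M f" "integrable M g" "\<And>x. norm (f x) \<le> g x"
  shows "norm (integral\<^sup>L M f) \<le> integral\<^sup>L M g"
  by (smt (verit, best) assms integrable_norm integral_mono integral_norm_bound)

lemma integrable_ind_bounded:
  fixes f :: "'a::euclidean_space \<Rightarrow> 'b::{banach,second_countable_topology}"
  assumes C: "C \<in> sets borel" "bounded C" and f: "f \<in> borel_measurable borel"
    and B: "\<And>x. norm (f x) \<le> B"
  shows "integrable lborel (\<lambda>x. indicator C x *\<^sub>R f x)"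
proof (rule Bochner_Integration.integrable_bound)
  show "integrable lborel (\<lambda>x. B * indicator C x :: real)"
    using C emeasure_bounded_finite[of C] by (intro integrable_mult_right integrable_real_indicator) auto
  show "(\<lambda>x. indicator C x *\<^sub>R f x) \<in> borel_measurable lborel"
    using C f by measurable
  show "AE x in lborel. norm (indicator C x *\<^sub>R f x) \<le> norm (B * indicator C x :: real)"
    using B by (auto simp: indicator_def intro: order_trans[OF _ abs_ge_self])
qed

lemma norm_integral_ind_le:
  fixes f :: "'a::euclidean_space \<Rightarrow> 'b::{banach,second_countable_topology}"
  assumes C: "C \<in> sets borel" "bounded C" and f: "f \<in> borel_measurable borel"
    and B: "\<And>x. norm (f x) \<le> B"
  shows "norm (\<integral>x. indicator C x *\<^sub>R f x \<partial>lborel) \<le> B * measure lborel C"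
proof -
  have "norm (\<integral>x. indicator C x *\<^sub>R f x \<partial>lborel) \<le> (\<integral>x. B * indicator C x \<partial>lborel)"
    apply (rule my_norm_bound)
      apply (rule integrable_ind_bounded[OF C f B])
    using C emeasure_bounded_finite[of C] apply (intro integrable_mult_right integrable_real_indicator; simp)
    using B by (auto simp: indicator_def)
  also have "\<dots> = B * measure lborel C"
    using C by simp
  finally show ?thesis .
qed

lemma norm_integral_diff_le:
  fixes f :: "'a::euclidean_space \<Rightarrow> 'b::{banach,second_countable_topology}"
  assumes C: "C \<in> sets borel" "bounded C" and C': "C' \<in> sets borel" "bounded C'"
    and f: "f \<in> borel_measurable borel" and B: "\<And>x. norm (f x) \<le> 1"
  shows "norm ((\<integral>x. indicator C x *\<^sub>R f x \<partial>lborel) - (\<integral>x. indicator C' x *\<^sub>R f x \<partial>lborel))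
           \<le> measure lborel (C - C') + measure lborel (C' - C)"
proof -
  have i1: "integrable lborel (\<lambda>x. indicator C x *\<^sub>R f x)" by (rule integrable_ind_bounded[OF C f B])
  have i2: "integrable lborel (\<lambda>x. indicator C' x *\<^sub>R f x)" by (rule integrable_ind_bounded[OF C' f B])
  have m1: "C - C' \<in> sets borel" "bounded (C - C')" using C C' by (auto intro: bounded_subset)
  have m2: "C' - C \<in> sets borel" "bounded (C' - C)" using C C' by (auto intro: bounded_subset)
  have ii: "integrable lborel (\<lambda>x. indicator (C - C') x + indicator (C' - C) x :: real)"
    using m1 m2 emeasure_bounded_finite[of "C - C'"] emeasure_bounded_finite[of "C' - C"]
    by (intro Bochner_Integration.integrable_add integrable_real_indicator) auto
  have "(\<integral>x. indicator C x *\<^sub>R f x \<partial>lborel) - (\<integral>x. indicator C' x *\<^sub>R f x \<partial>lborel)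
      = (\<integral>x. indicator C x *\<^sub>R f x - indicator C' x *\<^sub>R f x \<partial>lborel)"
    using i1 i2 by simp
  also have "norm \<dots> \<le> (\<integral>x. indicator (C - C') x + indicator (C' - C) x \<partial>lborel)"
    apply (rule my_norm_bound)
    using i1 i2 apply simp
     apply (rule ii)
    using B by (auto simp: indicator_def)
  also have "\<dots> = measure lborel (C - C') + measure lborel (C' - C)"
    using m1 m2 emeasure_bounded_finite[of "C - C'"] emeasure_bounded_finite[of "C' - C"]
    by (subst Bochner_Integration.integral_add) auto
  finally show ?thesis .
qed

lemma shift_measure_bound:
  fixes C :: "'a::euclidean_space set"
  assumes cvx: "convex C" and bd: "bounded C" and cb: "cball c r \<subseteq> C" and r: "r > 0"
    and w: "norm w \<le> r"
  shows "measure lebesgue (C - (+) w ` C) \<le> real DIM('a) * (norm w / r) * measure lebesgue C"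
    and "measure lebesgue ((+) w ` C - C) \<le> real DIM('a) * (norm w / r) * measure lebesgue C"
proof -
  define e where "e = norm w / r"
  have e0: "0 \<le> e" and e1: "e \<le> 1" using w r by (auto simp: e_def)
  define X where "X = (\<lambda>x. (w + e *\<^sub>R c) + (1 - e) *\<^sub>R x) ` C"
  have CL: "C \<in> lmeasurable" by (rule measurable_convex[OF cvx bd])
  have C'L: "(+) w ` C \<in> lmeasurable" by (rule measurable_translation[OF CL])
  have "bounded X" unfolding X_def
    using bounded_translation[OF bounded_scaling[OF bd], of "w + e *\<^sub>R c" "1 - e"] by (simp add: image_image)
  then have XL: "X \<in> lmeasurable" unfolding X_def
    by (intro measurable_convex convex_affinity cvx)
  have mX: "measure lebesgue X = (1 - e) ^ DIM('a) * measure lebesgue C"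
  proof -
    have "X = (\<lambda>x. (1 - e) *\<^sub>R x + (w + e *\<^sub>R c)) ` C" unfolding X_def by (simp add: add.commute)
    then show ?thesis using measure_lebesgue_affine[of "1 - e" "w + e *\<^sub>R c" C] e1 by simp
  qed
  have XC: "X \<subseteq> C"
  proof
    fix y assume "y \<in> X"
    then obtain x where x: "x \<in> C" and y: "y = (w + e *\<^sub>R c) + (1 - e) *\<^sub>R x" unfolding X_def by auto
    show "y \<in> C"
    proof (cases "e = 0")
      case True
      then have "w = 0" using r by (simp add: e_def)
      then show ?thesis using y x True by simp
    next
      case False
      then have "c + (1/e) *\<^sub>R w \<in> cball c r" using r e0 by (simp add: dist_norm e_def)
      then have cw: "c + (1/e) *\<^sub>R w \<in> C" using cb by auto
      have "y = (1 - e) *\<^sub>R x + e *\<^sub>R (c + (1/e) *\<^sub>R w)"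
        using False by (simp add: y algebra_simps)
      then show ?thesis using convexD[OF cvx x cw, of "1 - e" e] e0 e1 by simp
    qed
  qed
  have XC': "X \<subseteq> (+) w ` C"
  proof
    fix y assume "y \<in> X"
    then obtain x where x: "x \<in> C" and y: "y = (w + e *\<^sub>R c) + (1 - e) *\<^sub>R x" unfolding X_def by auto
    have "e *\<^sub>R c + (1 - e) *\<^sub>R x \<in> C"
    proof -
      have "c \<in> C" using cb r by (auto intro: subsetD[OF cb])
      then show ?thesis using convexD[OF cvx _ x, of c e "1 - e"] e0 e1 by (auto simp: add.commute)
    qed
    then show "y \<in> (+) w ` C" using y by (auto simp: image_iff intro!: bexI[where x="e *\<^sub>R c + (1 - e) *\<^sub>R x"])
  qed
  have bern: "1 - real DIM('a) * e \<le> (1 - e) ^ DIM('a)"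
    using Bernoulli_inequality[of "- e" "DIM('a)"] e1 by simp
  have mC0: "0 \<le> measure lebesgue C" by simp
  have mI: "(1 - e) ^ DIM('a) * measure lebesgue C \<le> measure lebesgue (C \<inter> (+) w ` C)"
    using mX measure_mono_fmeasurable[of X "C \<inter> (+) w ` C" lebesgue] XC XC' XL CL C'L by auto
  have key: "measure lebesgue C - measure lebesgue (C \<inter> (+) w ` C) \<le> real DIM('a) * e * measure lebesgue C"
    using mI mult_right_mono[OF bern mC0] by (simp add: algebra_simps)
  have "measure lebesgue (C - (+) w ` C) = measure lebesgue (C - (C \<inter> (+) w ` C))"
    by (simp add: Diff_Int)
  also have "\<dots> = measure lebesgue C - measure lebesgue (C \<inter> (+) w ` C)"
    using CL C'L by (intro measure_Diff) (auto simp: fmeasurable_def)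
  finally show "measure lebesgue (C - (+) w ` C) \<le> real DIM('a) * (norm w / r) * measure lebesgue C"
    using key by (simp add: e_def)
  have "measure lebesgue ((+) w ` C - C) = measure lebesgue ((+) w ` C - (C \<inter> (+) w ` C))"
    by (rule arg_cong[where f="measure lebesgue"]) blast
  also have "\<dots> = measure lebesgue ((+) w ` C) - measure lebesgue (C \<inter> (+) w ` C)"
    using CL C'L by (intro measure_Diff) (auto simp: fmeasurable_def)
  also have "\<dots> = measure lebesgue C - measure lebesgue (C \<inter> (+) w ` C)"
    by (simp add: measure_translation)
  finally show "measure lebesgue ((+) w ` C - C) \<le> real DIM('a) * (norm w / r) * measure lebesgue C"
    using key by (simp add: e_def)
qed

lemma exp_shift_pi: "exp (- \<i> * complex_of_real (a + pi)) = - exp (- \<i> * complex_of_real a)"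
proof -
  have e: "exp (- \<i> * complex_of_real (a + pi)) = exp (- \<i> * complex_of_real a) * exp (- (\<i> * complex_of_real pi))"
    by (simp add: algebra_simps flip: exp_add)
  have "exp (- (\<i> * complex_of_real pi)) = -1"
    by (simp add: exp_minus exp_pi_i')
  then show ?thesis using e by simp
qed

lemma norm_exp_mi: "norm (exp (- \<i> * complex_of_real a)) = 1"
proof -
  have "- \<i> * complex_of_real a = \<i> * complex_of_real (- a)" by simp
  then show ?thesis by (simp only: norm_exp_i_times)
qed

lemma measure_lborel_lebesgue: "X \<in> sets borel \<Longrightarrow> measure lborel X = measure lebesgue X"
  by simp

lemma osc:
  fixes C :: "'a::euclidean_space set" and g :: 'a
  assumes Cb: "C \<in> sets borel" and cvx: "convex C" and bd: "bounded C" and g: "g \<noteq> 0"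
  shows "\<exists>K. \<forall>\<omega>. \<omega> \<noteq> 0 \<longrightarrow>
     norm (\<integral>x. indicator C x *\<^sub>R exp (- \<i> * complex_of_real (\<omega> * (g \<bullet> x))) \<partial>lborel) \<le> K / \<bar>\<omega>\<bar>"
proof -
  define f where "f \<omega> x = exp (- \<i> * complex_of_real (\<omega> * (g \<bullet> x)))" for \<omega> x
  have fm[measurable]: "f \<omega> \<in> borel_measurable borel" for \<omega>
    unfolding f_def by measurable
  have fn: "norm (f \<omega> x) \<le> 1" for \<omega> x
    unfolding f_def by (simp add: norm_exp_mi)
  define \<mu> where "\<mu> = measure lborel C"
  have \<mu>0: "0 \<le> \<mu>" by (simp add: \<mu>_def)
  have base: "norm (\<integral>x. indicator C x *\<^sub>R f \<omega> x \<partial>lborel) \<le> \<mu>" for \<omega>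
    using norm_integral_ind_le[OF Cb bd fm fn] by (simp add: \<mu>_def)
  show ?thesis
  proof (cases "interior C = {}")
    case True
    then have "negligible C" using negligible_convex_interior[OF cvx] by simp
    then have "measure lebesgue C = 0" by (rule negligible_imp_measure0)
    then have "\<mu> = 0" using Cb by (simp add: \<mu>_def)
    then show ?thesis using base unfolding f_def by (intro exI[of _ 0]) auto
  next
    case False
    then obtain c where "c \<in> interior C" by auto
    then obtain e where e: "e > 0" "ball c e \<subseteq> C" by (auto simp: mem_interior)
    define r where "r = e / 2"
    have r: "r > 0" using e by (simp add: r_def)
    have cb: "cball c r \<subseteq> C" using e by (auto simp: r_def intro!: subsetD[OF e(2)])
    define \<omega>0 where "\<omega>0 = pi / (norm g * r)"
    have \<omega>0: "\<omega>0 > 0" using g r by (simp add: \<omega>0_def)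
    define n where "n = real DIM('a)"
    have n1: "n \<ge> 1" by (simp add: n_def DIM_positive Suc_le_eq)
    show ?thesis
    proof (intro exI[of _ "n * \<mu> * \<omega>0"] allI impI)
      fix \<omega> :: real assume \<omega>: "\<omega> \<noteq> 0"
      have aw: "\<bar>\<omega>\<bar> > 0" using \<omega> by simp
      show "norm (\<integral>x. indicator C x *\<^sub>R exp (- \<i> * complex_of_real (\<omega> * (g \<bullet> x))) \<partial>lborel) \<le> n * \<mu> * \<omega>0 / \<bar>\<omega>\<bar>"
      proof (cases "\<bar>\<omega>\<bar> < \<omega>0")
        case True
        have "\<mu> \<le> \<mu> * (\<omega>0 / \<bar>\<omega>\<bar>)"
          using True aw \<mu>0 by (simp add: field_simps mult_left_mono)
        also have "\<dots> \<le> n * \<mu> * \<omega>0 / \<bar>\<omega>\<bar>"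
        proof -
          have "\<mu> * \<omega>0 \<le> n * (\<mu> * \<omega>0)"
            using n1 mult_nonneg_nonneg[OF \<mu>0 less_imp_le[OF \<omega>0]] by (simp add: mult_le_cancel_right1)
          then show ?thesis using aw by (simp add: divide_right_mono mult.assoc)
        qed
        finally show ?thesis using base[of \<omega>] unfolding f_def by simp
      next
        case False
        define w where "w = (pi / (\<omega> * (norm g)\<^sup>2)) *\<^sub>R g"
        have nw: "norm w = pi / (\<bar>\<omega>\<bar> * norm g)"
          using g \<omega> by (simp add: w_def power2_eq_square abs_mult)
        have nwr: "norm w \<le> r"
        proof -
          have "pi / (\<bar>\<omega>\<bar> * norm g) \<le> pi / (\<omega>0 * norm g)"
            using False g \<omega>0 by (intro divide_left_mono mult_right_mono) auto
          also have "\<dots> = r" using g r by (simp add: \<omega>0_def)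
          finally show ?thesis using nw by simp
        qed
        have gw: "g \<bullet> w = pi / \<omega>"
          using g by (simp add: w_def power2_norm_eq_inner)
        have fshift: "f \<omega> (y + w) = - f \<omega> y" for y
        proof -
          have "\<omega> * (g \<bullet> (y + w)) = \<omega> * (g \<bullet> y) + pi"
            using \<omega> by (simp add: inner_add_right gw algebra_simps)
          then show ?thesis unfolding f_def by (simp only: exp_shift_pi)
        qed
        define C' where "C' = (+) w ` C"
        have C'eq: "C' = {x. x - w \<in> C}"
          unfolding C'_def by (auto simp: image_iff intro!: bexI[where x="_ - w"])
        have C'b: "C' \<in> sets borel" unfolding C'eq using Cb by measurable
        have C'bd: "bounded C'" unfolding C'_def using bounded_translation[OF bd, of w] by simp
        define I where "I = (\<integral>x. indicator C x *\<^sub>R f \<omega> x \<partial>lborel)"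
        have I': "(\<integral>x. indicator C' x *\<^sub>R f \<omega> x \<partial>lborel) = - I"
        proof -
          have "(\<integral>x. indicator C' x *\<^sub>R f \<omega> x \<partial>lborel) = (\<integral>y. indicator C' (y + w) *\<^sub>R f \<omega> (y + w) \<partial>lborel)"
            by (rule lborel_integral_translate[symmetric]) (use C'b in measurable)
          also have "\<dots> = (\<integral>y. - (indicator C y *\<^sub>R f \<omega> y) \<partial>lborel)"
            by (intro Bochner_Integration.integral_cong refl) (simp add: fshift C'eq indicator_def)
          also have "\<dots> = - I" by (simp add: I_def)
          finally show ?thesis .
        qed
        have "norm (I - (- I)) \<le> measure lborel (C - C') + measure lborel (C' - C)"
          using norm_integral_diff_le[OF Cb bd C'b C'bd fm[of \<omega>] fn[of \<omega>]] I' by (simp add: I_def)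
        also have "\<dots> = measure lebesgue (C - C') + measure lebesgue (C' - C)"
          using Cb C'b by simp
        also have "\<dots> \<le> 2 * (n * (norm w / r) * measure lebesgue C)"
          using add_mono[OF shift_measure_bound[OF cvx bd cb r nwr]] unfolding C'_def n_def by (simp only: mult_2)
        also have "measure lebesgue C = \<mu>" using Cb by (simp add: \<mu>_def)
        finally have "2 * norm I \<le> 2 * (n * (norm w / r) * \<mu>)"
          by (simp add: norm_minus_commute)
        then have "norm I \<le> n * (norm w / r) * \<mu>" by simp
        also have "\<dots> = n * \<mu> * \<omega>0 / \<bar>\<omega>\<bar>"
          using g r aw by (simp add: nw \<omega>0_def field_simps)
        finally show ?thesis by (simp add: I_def f_def)
      qed
    qed
  qed
qed

definition lineset :: "'a::euclidean_space set \<Rightarrow> 'a \<Rightarrow> 'a \<Rightarrow> real set" where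
  "lineset P u x = {t. x + t *\<^sub>R u \<in> P}"
definition hit :: "'a::euclidean_space set \<Rightarrow> 'a \<Rightarrow> 'a set" where
  "hit P u = {x \<in> slab u. lineset P u x \<noteq> {}}"
definition hi :: "'a::euclidean_space set \<Rightarrow> 'a \<Rightarrow> 'a \<Rightarrow> real" where
  "hi P u x = Sup (lineset P u x)"
definition beta :: "'a::euclidean_space set \<Rightarrow> 'a \<Rightarrow> 'a \<Rightarrow> real" where
  "beta P u x = u \<bullet> x + hi P u x"
definition topv :: "'a::euclidean_space set \<Rightarrow> 'a \<Rightarrow> real" where
  "topv P u = Sup ((\<lambda>z. u \<bullet> z) ` P)"
definition topset :: "'a::euclidean_space set \<Rightarrow> 'a \<Rightarrow> 'a set" where
  "topset P u = {x \<in> slab u. \<exists>t. x + t *\<^sub>R u \<in> P \<and> u \<bullet> (x + t *\<^sub>R u) = topv P u}"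

lemma closed_line_sweep:
  fixes K :: "'a::euclidean_space set"
  assumes "compact K"
  shows "closed {x. \<exists>t. x + t *\<^sub>R u \<in> K}"
proof -
  have "{x. \<exists>t. x + t *\<^sub>R u \<in> K} = (\<Union>x\<in>span {u}. \<Union>y\<in>K. {x + y})"
  proof (intro set_eqI iffI)
    fix x assume "x \<in> {x. \<exists>t. x + t *\<^sub>R u \<in> K}"
    then obtain t where t: "x + t *\<^sub>R u \<in> K" by auto
    have "(- t) *\<^sub>R u \<in> span {u}" by (rule span_scale[OF span_base]) simp
    moreover have "x = (- t) *\<^sub>R u + (x + t *\<^sub>R u)" by simp
    ultimately show "x \<in> (\<Union>x\<in>span {u}. \<Union>y\<in>K. {x + y})" using t by blast
  next
    fix x assume "x \<in> (\<Union>x\<in>span {u}. \<Union>y\<in>K. {x + y})"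
    then obtain v y where v: "v \<in> span {u}" and y: "y \<in> K" and x: "x = v + y" by auto
    from v obtain k where k: "v = k *\<^sub>R u" by (auto simp: span_singleton)
    have "x + (- k) *\<^sub>R u = y" using x k by simp
    then show "x \<in> {x. \<exists>t. x + t *\<^sub>R u \<in> K}" using y by (auto intro!: exI[of _ "- k"])
  qed
  then show ?thesis using closed_compact_sums[OF closed_span assms] by simp
qed

lemma convex_slab: "convex (slab u)"
proof -
  have "slab u = {x. u \<bullet> x \<le> 1/2} \<inter> {x. (- u) \<bullet> x \<le> 1/2}"
    by (auto simp: slab_def abs_le_iff)
  then show ?thesis using convex_Int[OF convex_halfspace_le convex_halfspace_le] by metis
qed

lemma top_lemma:
  fixes a :: "nat \<Rightarrow> 'a::euclidean_space" and b :: "nat \<Rightarrow> real" and u :: 'a and P :: "'a set"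
  assumes P: "P = {z. \<forall>j<m. a j \<bullet> z \<le> b j}" and bdd: "bounded P" and ne: "P \<noteq> {}" and u: "norm u = 1"
  shows "\<exists>K. \<forall>\<omega>. integrable lborel (\<lambda>x. indicator (hit P u) x *\<^sub>R exp (- \<i> * complex_of_real (\<omega> * beta P u x)))
      \<and> (\<omega> \<noteq> 0 \<longrightarrow> norm ((\<integral>x. indicator (hit P u) x *\<^sub>R exp (- \<i> * complex_of_real (\<omega> * beta P u x)) \<partial>lborel)
            - measure lborel (topset P u) *\<^sub>R exp (- \<i> * complex_of_real (\<omega> * topv P u))) \<le> K / \<bar>\<omega>\<bar>)"
proof -
  have uu: "u \<bullet> u = 1" using u by (simp add: norm_eq_1)
  have Peq: "P = (\<Inter>j\<in>{..<m}. {z. a j \<bullet> z \<le> b j})" using P by auto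
  have clP: "closed P" unfolding Peq by (intro closed_INT ballI closed_halfspace_le)
  have cvP: "convex P" unfolding Peq by (intro convex_INT ballI convex_halfspace_le)
  have cpP: "compact P" using clP bdd by (simp add: compact_eq_bounded_closed)
  obtain B where B: "\<forall>z\<in>P. norm z \<le> B" using bdd by (auto simp: bounded_iff)
  define Jp where "Jp = {j. j < m \<and> a j \<bullet> u > 0}"
  have finJ: "finite Jp" by (simp add: Jp_def)
  have Jne: "Jp \<noteq> {}"
  proof
    assume J0: "Jp = {}"
    obtain z where z: "z \<in> P" using ne by auto
    have up: "z + t *\<^sub>R u \<in> P" if t0: "t \<ge> 0" for t
    proof -
      have "a j \<bullet> (z + t *\<^sub>R u) \<le> b j" if j: "j < m" for j
      proof -
        have "a j \<bullet> u \<le> 0" using J0 j by (auto simp: Jp_def)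
        then have "t * (a j \<bullet> u) \<le> 0" using t0 by (simp add: mult_nonneg_nonpos)
        moreover have "a j \<bullet> z \<le> b j" using z j P by auto
        ultimately show ?thesis by (simp add: inner_add_right)
      qed
      then show ?thesis using P by auto
    qed
    define t where "t = B + norm z + 1"
    have Bz: "norm z \<le> B" using B z by auto
    have t0: "t \<ge> 0" using Bz norm_ge_zero[of z] unfolding t_def by linarith
    have "norm (z + t *\<^sub>R u) \<le> B" using B up[OF t0] by blast
    moreover have "norm (t *\<^sub>R u) \<le> norm (z + t *\<^sub>R u) + norm z"
      using norm_triangle_ineq4[of "z + t *\<^sub>R u" z] by simp
    moreover have "norm (t *\<^sub>R u) = t" using t0 u by simp
    ultimately show False using Bz by (simp add: t_def)
  qed
  define r where "r j x = (b j - a j \<bullet> x) / (a j \<bullet> u)" for j x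
  define c where "c j = b j / (a j \<bullet> u)" for j
  define g where "g j = u - (1 / (a j \<bullet> u)) *\<^sub>R a j" for j
  define ell where "ell j x = c j + g j \<bullet> x" for j x
  have ellr: "ell j x = u \<bullet> x + r j x" for j x
    by (simp add: ell_def c_def g_def r_def inner_diff_left diff_divide_distrib)
  have hi_facts: "x + hi P u x *\<^sub>R u \<in> P \<and> (\<forall>t. x + t *\<^sub>R u \<in> P \<longrightarrow> t \<le> hi P u x)
      \<and> (\<forall>j\<in>Jp. hi P u x \<le> r j x) \<and> (\<exists>j\<in>Jp. hi P u x = r j x)"
    if ne_x: "lineset P u x \<noteq> {}" for x
  proof -
    define M where "M = Min ((\<lambda>j. r j x) ` Jp)"
    have Mle: "M \<le> r j x" if "j \<in> Jp" for j using that finJ by (simp add: M_def)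
    have "M \<in> (\<lambda>j. r j x) ` Jp" unfolding M_def using finJ Jne by (intro Min_in) auto
    then have Min: "\<exists>j\<in>Jp. M = r j x" by auto
    have ub: "t \<le> M" if tP: "x + t *\<^sub>R u \<in> P" for t
    proof -
      obtain j where j: "j \<in> Jp" "M = r j x" using Min by auto
      have "a j \<bullet> (x + t *\<^sub>R u) \<le> b j" using tP j P by (auto simp: Jp_def)
      then have "t * (a j \<bullet> u) \<le> b j - a j \<bullet> x" by (simp add: inner_add_right algebra_simps)
      then have "t \<le> r j x" using j by (simp add: r_def Jp_def pos_le_divide_eq)
      then show ?thesis using j by simp
    qed
    obtain t0 where t0: "x + t0 *\<^sub>R u \<in> P" using ne_x by (auto simp: lineset_def)
    have t0M: "t0 \<le> M" using ub t0 .
    have MP: "x + M *\<^sub>R u \<in> P"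
    proof -
      have "a j \<bullet> (x + M *\<^sub>R u) \<le> b j" if j: "j < m" for j
      proof (cases "a j \<bullet> u > 0")
        case True
        then have "j \<in> Jp" using j by (simp add: Jp_def)
        then have "M \<le> (b j - a j \<bullet> x) / (a j \<bullet> u)" using Mle by (simp add: r_def)
        then have "M * (a j \<bullet> u) \<le> b j - a j \<bullet> x" using True by (simp add: pos_le_divide_eq)
        then show ?thesis by (simp add: inner_add_right)
      next
        case False
        have "M * (a j \<bullet> u) \<le> t0 * (a j \<bullet> u)" using False t0M by (simp add: mult_right_mono_neg)
        moreover have "a j \<bullet> (x + t0 *\<^sub>R u) \<le> b j" using t0 j P by auto
        ultimately show ?thesis by (simp add: inner_add_right)
      qed
      then show ?thesis using P by auto
    qed
    have "hi P u x = M"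
      unfolding hi_def lineset_def by (rule cSup_eq_maximum) (use MP ub in auto)
    then show ?thesis using MP ub Mle Min by auto
  qed
  obtain zs where zs: "zs \<in> P" "\<forall>z\<in>P. u \<bullet> z \<le> u \<bullet> zs"
  proof -
    have "continuous_on P ((\<bullet>) u)" by (intro continuous_intros)
    then show ?thesis using continuous_attains_sup[OF cpP ne, of "\<lambda>z. u \<bullet> z"] that by blast
  qed
  define t1 where "t1 = topv P u"
  have t1: "t1 = u \<bullet> zs" unfolding t1_def topv_def by (rule cSup_eq_maximum) (use zs in auto)
  have le_t1: "u \<bullet> z \<le> t1" if "z \<in> P" for z using zs that t1 by auto
  have beta_le: "beta P u x \<le> ell j x" if "x \<in> hit P u" "j \<in> Jp" for x j
    using hi_facts[of x] that by (auto simp: hit_def beta_def ellr)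
  have beta_eq: "\<exists>j\<in>Jp. beta P u x = ell j x" if "x \<in> hit P u" for x
    using hi_facts[of x] that by (auto simp: hit_def beta_def ellr)
  have beta_t1: "beta P u x \<le> t1" if "x \<in> hit P u" for x
  proof -
    have "x + hi P u x *\<^sub>R u \<in> P" using hi_facts[of x] that by (auto simp: hit_def)
    then have "u \<bullet> (x + hi P u x *\<^sub>R u) \<le> t1" by (rule le_t1)
    then show ?thesis by (simp add: beta_def inner_add_right uu)
  qed
  have topset_iff: "x \<in> topset P u \<longleftrightarrow> x \<in> hit P u \<and> beta P u x = t1" for x
  proof
    assume x: "x \<in> topset P u"
    then obtain t where t: "x \<in> slab u" "x + t *\<^sub>R u \<in> P" "u \<bullet> (x + t *\<^sub>R u) = t1"
      by (auto simp: topset_def t1_def)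
    then have xh: "x \<in> hit P u" by (auto simp: hit_def lineset_def)
    have "t \<le> hi P u x" using hi_facts[of x] t xh by (auto simp: hit_def)
    then have "t1 \<le> beta P u x" using t(3) by (simp add: beta_def inner_add_right uu)
    then show "x \<in> hit P u \<and> beta P u x = t1" using beta_t1[OF xh] xh by auto
  next
    assume x: "x \<in> hit P u \<and> beta P u x = t1"
    then have "x + hi P u x *\<^sub>R u \<in> P" using hi_facts[of x] by (auto simp: hit_def)
    moreover have "u \<bullet> (x + hi P u x *\<^sub>R u) = t1" using x by (simp add: beta_def inner_add_right uu)
    ultimately show "x \<in> topset P u" using x by (auto simp: topset_def hit_def t1_def)
  qed
  have hit_eq: "hit P u = slab u \<inter> {x. \<exists>t. x + t *\<^sub>R u \<in> P}"
    by (auto simp: hit_def lineset_def)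
  have cl_hit: "closed (hit P u)" unfolding hit_eq
    by (intro closed_Int closed_slab closed_line_sweep cpP)
  have top_eq: "topset P u = slab u \<inter> {x. \<exists>t. x + t *\<^sub>R u \<in> P \<inter> {z. u \<bullet> z = t1}}"
    by (auto simp: topset_def t1_def)
  have cl_top: "closed (topset P u)" unfolding top_eq
    by (intro closed_Int closed_slab closed_line_sweep compact_Int_closed cpP closed_hyperplane)
  have bd_hit: "bounded (hit P u)"
  proof -
    have "norm x \<le> 2 * B + 1" if xh: "x \<in> hit P u" for x
    proof -
      obtain t where t: "x + t *\<^sub>R u \<in> P" and sl: "\<bar>u \<bullet> x\<bar> * 2 \<le> 1"
        using xh by (auto simp: hit_def lineset_def slab_def)
      have nz: "norm (x + t *\<^sub>R u) \<le> B" using B t by auto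
      have "\<bar>u \<bullet> (x + t *\<^sub>R u)\<bar> \<le> norm u * norm (x + t *\<^sub>R u)" by (rule Cauchy_Schwarz_ineq2)
      moreover have "u \<bullet> (x + t *\<^sub>R u) = u \<bullet> x + t" by (simp add: inner_add_right uu)
      ultimately have "\<bar>t\<bar> \<le> B + 1/2" using nz sl u by simp
      moreover have "norm x \<le> norm (x + t *\<^sub>R u) + norm (t *\<^sub>R u)"
        using norm_triangle_ineq4[of "x + t *\<^sub>R u" "t *\<^sub>R u"] by simp
      ultimately show ?thesis using nz u by simp
    qed
    then show ?thesis by (auto simp: bounded_iff)
  qed
  have bd_top: "bounded (topset P u)"
    by (rule bounded_subset[OF bd_hit]) (use topset_iff in auto)
  have cv_hit: "convex (hit P u)"
  proof -
    have "convex {x. \<exists>t. x + t *\<^sub>R u \<in> P}"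
      unfolding convex_def
    proof (intro ballI allI impI)
      fix x y :: 'a and p q :: real
      assume x: "x \<in> {x. \<exists>t. x + t *\<^sub>R u \<in> P}" and y: "y \<in> {x. \<exists>t. x + t *\<^sub>R u \<in> P}"
        and pq: "0 \<le> p" "0 \<le> q" "p + q = 1"
      obtain s where s: "x + s *\<^sub>R u \<in> P" using x by auto
      obtain t where t: "y + t *\<^sub>R u \<in> P" using y by auto
      have "p *\<^sub>R (x + s *\<^sub>R u) + q *\<^sub>R (y + t *\<^sub>R u) \<in> P"
        using convexD[OF cvP s t pq] .
      moreover have "p *\<^sub>R (x + s *\<^sub>R u) + q *\<^sub>R (y + t *\<^sub>R u) = (p *\<^sub>R x + q *\<^sub>R y) + (p * s + q * t) *\<^sub>R u"
        by (simp add: algebra_simps)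
      ultimately show "p *\<^sub>R x + q *\<^sub>R y \<in> {x. \<exists>t. x + t *\<^sub>R u \<in> P}" by auto
    qed
    then show ?thesis unfolding hit_eq by (intro convex_Int convex_slab)
  qed
  define G where "G j = {x \<in> hit P u. ell j x < t1 \<and> (\<forall>k\<in>Jp. (k < j \<longrightarrow> ell j x < ell k x) \<and> ell j x \<le> ell k x)}" for j
  have G_eq: "G j = hit P u \<inter> {x. g j \<bullet> x < t1 - c j}
      \<inter> (\<Inter>k\<in>{k\<in>Jp. k < j}. {x. (g j - g k) \<bullet> x < c k - c j})
      \<inter> (\<Inter>k\<in>Jp. {x. (g j - g k) \<bullet> x \<le> c k - c j})" for j
    by (auto simp: G_def ell_def inner_diff_left algebra_simps)
  have G_props: "G j \<in> sets borel \<and> convex (G j) \<and> bounded (G j)" for j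
  proof (intro conjI)
    have "closed (hit P u \<inter> (\<Inter>k\<in>Jp. {x. (g j - g k) \<bullet> x \<le> c k - c j}))"
      by (intro closed_Int cl_hit closed_INT ballI closed_halfspace_le)
    moreover have "open ({x. g j \<bullet> x < t1 - c j} \<inter> (\<Inter>k\<in>{k\<in>Jp. k < j}. {x. (g j - g k) \<bullet> x < c k - c j}))"
      using finJ by (intro open_Int open_halfspace_lt open_INT ballI) auto
    ultimately have "(hit P u \<inter> (\<Inter>k\<in>Jp. {x. (g j - g k) \<bullet> x \<le> c k - c j}))
      \<inter> ({x. g j \<bullet> x < t1 - c j} \<inter> (\<Inter>k\<in>{k\<in>Jp. k < j}. {x. (g j - g k) \<bullet> x < c k - c j})) \<in> sets borel"
      by (intro sets.Int borel_closed borel_open)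
    moreover have "G j = (hit P u \<inter> (\<Inter>k\<in>Jp. {x. (g j - g k) \<bullet> x \<le> c k - c j}))
      \<inter> ({x. g j \<bullet> x < t1 - c j} \<inter> (\<Inter>k\<in>{k\<in>Jp. k < j}. {x. (g j - g k) \<bullet> x < c k - c j}))"
      unfolding G_eq by blast
    ultimately show "G j \<in> sets borel" by simp
    show "convex (G j)" unfolding G_eq
      by (intro convex_Int cv_hit convex_halfspace_lt convex_INT ballI convex_halfspace_le)
    show "bounded (G j)" by (rule bounded_subset[OF bd_hit]) (auto simp: G_def)
  qed
  define E where "E \<omega> y = exp (- \<i> * complex_of_real (\<omega> * y))" for \<omega> y
  have nE: "norm (E \<omega> y) \<le> 1" for \<omega> y by (simp add: E_def norm_exp_mi)
  have decomp: "indicator (hit P u) x *\<^sub>R E \<omega> (beta P u x)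
      = indicator (topset P u) x *\<^sub>R E \<omega> t1 + (\<Sum>j\<in>Jp. indicator (G j) x *\<^sub>R E \<omega> (ell j x))" for \<omega> x
  proof (cases "x \<in> hit P u")
    case False
    then have "x \<notin> topset P u" "\<forall>j. x \<notin> G j" using topset_iff by (auto simp: G_def)
    then show ?thesis using False by simp
  next
    case True
    show ?thesis
    proof (cases "beta P u x = t1")
      case eq: True
      have "x \<notin> G j" if "j \<in> Jp" for j
        using beta_le[OF True that] eq by (auto simp: G_def)
      then show ?thesis using True eq topset_iff[of x] by simp
    next
      case ne: False
      have lt: "beta P u x < t1" using beta_t1[OF True] ne by simp
      define j0 where "j0 = (LEAST j. j \<in> Jp \<and> beta P u x = ell j x)"
      have ex: "\<exists>j. j \<in> Jp \<and> beta P u x = ell j x" using beta_eq[OF True] by auto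
      have j0: "j0 \<in> Jp" "beta P u x = ell j0 x" using LeastI_ex[OF ex] by (auto simp: j0_def)
      have j0min: "j0 \<le> k" if "k \<in> Jp" "beta P u x = ell k x" for k
        using Least_le[of "\<lambda>j. j \<in> Jp \<and> beta P u x = ell j x" k] that by (simp add: j0_def)
      have x_j0: "x \<in> G j0"
      proof -
        have "(k < j0 \<longrightarrow> ell j0 x < ell k x) \<and> ell j0 x \<le> ell k x" if k: "k \<in> Jp" for k
        proof -
          have le: "ell j0 x \<le> ell k x" using beta_le[OF True k] j0(2) by simp
          have "ell j0 x < ell k x" if "k < j0"
          proof (rule ccontr)
            assume "\<not> ell j0 x < ell k x"
            then have "beta P u x = ell k x" using le j0(2) by simp
            then have "j0 \<le> k" using j0min k by simp
            then show False using that by simp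
          qed
          then show ?thesis using le by simp
        qed
        then show ?thesis using True j0 lt by (auto simp: G_def)
      qed
      have inG: "x \<in> G j \<longleftrightarrow> j = j0" if jJ: "j \<in> Jp" for j
      proof
        assume xG: "x \<in> G j"
        have "ell j x \<le> ell j0 x" using xG j0 by (auto simp: G_def)
        then have eqj: "beta P u x = ell j x" using beta_le[OF True jJ] j0 by simp
        then have "j0 \<le> j" using j0min jJ by simp
        moreover have "\<not> j0 < j" using xG j0 eqj by (auto simp: G_def)
        ultimately show "j = j0" by simp
      qed (use x_j0 in simp)
      have "(\<Sum>j\<in>Jp. indicator (G j) x *\<^sub>R E \<omega> (ell j x)) = (\<Sum>j\<in>Jp. if j = j0 then E \<omega> (beta P u x) else 0)"
        using inG j0 by (intro sum.cong refl) (auto simp: indicator_def)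
      also have "\<dots> = E \<omega> (beta P u x)" using j0 finJ by simp
      finally show ?thesis using True ne topset_iff[of x] by simp
    qed
  qed
  have Em: "(\<lambda>x. E \<omega> (f x)) \<in> borel_measurable borel" if "f \<in> borel_measurable borel" for \<omega> f
    unfolding E_def using that by measurable
  have ellm: "ell j \<in> borel_measurable borel" for j unfolding ell_def by measurable
  have int_G: "integrable lborel (\<lambda>x. indicator (G j) x *\<^sub>R E \<omega> (ell j x))" for j \<omega>
    using G_props[of j] by (intro integrable_ind_bounded[where B=1] Em ellm nE) auto
  have top_b: "topset P u \<in> sets borel" using cl_top by (rule borel_closed)
  have int_T: "integrable lborel (\<lambda>x. indicator (topset P u) x *\<^sub>R E \<omega> t1)" for \<omega>
    by (rule integrable_ind_bounded[OF top_b bd_top _ nE]) simp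
  have dec_fun: "(\<lambda>x. indicator (hit P u) x *\<^sub>R E \<omega> (beta P u x))
      = (\<lambda>x. indicator (topset P u) x *\<^sub>R E \<omega> t1 + (\<Sum>j\<in>Jp. indicator (G j) x *\<^sub>R E \<omega> (ell j x)))" for \<omega>
    by (rule ext) (rule decomp)
  have int_main: "integrable lborel (\<lambda>x. indicator (hit P u) x *\<^sub>R E \<omega> (beta P u x))" for \<omega>
    unfolding dec_fun using int_T int_G by (intro Bochner_Integration.integrable_add integrable_sum) auto
  have int_eq: "(\<integral>x. indicator (hit P u) x *\<^sub>R E \<omega> (beta P u x) \<partial>lborel)
      - measure lborel (topset P u) *\<^sub>R E \<omega> t1 = (\<Sum>j\<in>Jp. \<integral>x. indicator (G j) x *\<^sub>R E \<omega> (ell j x) \<partial>lborel)" for \<omega>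
  proof -
    have "(\<integral>x. indicator (hit P u) x *\<^sub>R E \<omega> (beta P u x) \<partial>lborel)
       = (\<integral>x. indicator (topset P u) x *\<^sub>R E \<omega> t1 \<partial>lborel) + (\<Sum>j\<in>Jp. \<integral>x. indicator (G j) x *\<^sub>R E \<omega> (ell j x) \<partial>lborel)"
      unfolding dec_fun using int_T int_G
      by (subst Bochner_Integration.integral_add) (auto intro!: integral_sum)
    moreover have "(\<integral>x. indicator (topset P u) x *\<^sub>R E \<omega> t1 \<partial>lborel) = measure lborel (topset P u) *\<^sub>R E \<omega> t1"
      using top_b bd_top emeasure_bounded_finite[of "topset P u"]
      by (subst integral_scaleR_left) auto
    ultimately show ?thesis by simp
  qed
  have bnd_j: "\<exists>K. \<forall>\<omega>. \<omega> \<noteq> 0 \<longrightarrow> norm (\<integral>x. indicator (G j) x *\<^sub>R E \<omega> (ell j x) \<partial>lborel) \<le> K / \<bar>\<omega>\<bar>"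
    if jJ: "j \<in> Jp" for j
  proof (cases "g j = 0")
    case True
    have "G j = {}"
    proof (rule ccontr)
      assume "G j \<noteq> {}"
      then obtain x where x: "x \<in> G j" by auto
      then have lx: "c j < t1" using True by (auto simp: G_def ell_def)
      define xs where "xs = zs - (u \<bullet> zs) *\<^sub>R u"
      have "u \<bullet> xs = 0" by (simp add: xs_def inner_diff_right uu)
      then have "xs \<in> slab u" by (simp add: slab_def)
      moreover have "xs + (u \<bullet> zs) *\<^sub>R u = zs" by (simp add: xs_def)
      ultimately have "xs \<in> topset P u" using zs t1 by (auto simp: topset_def t1_def intro!: exI[of _ "u \<bullet> zs"])
      then have "xs \<in> hit P u" "beta P u xs = t1" using topset_iff by auto
      then have "t1 \<le> ell j xs" using beta_le jJ by metis
      then show False using lx True by (simp add: ell_def)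
    qed
    then show ?thesis by (intro exI[of _ 0]) simp
  next
    case False
    obtain K where K: "\<forall>\<omega>. \<omega> \<noteq> 0 \<longrightarrow> norm (\<integral>x. indicator (G j) x *\<^sub>R exp (- \<i> * complex_of_real (\<omega> * (g j \<bullet> x))) \<partial>lborel) \<le> K / \<bar>\<omega>\<bar>"
      using osc[of "G j" "g j"] G_props[of j] False by blast
    have "norm (\<integral>x. indicator (G j) x *\<^sub>R E \<omega> (ell j x) \<partial>lborel) \<le> K / \<bar>\<omega>\<bar>" if "\<omega> \<noteq> 0" for \<omega>
    proof -
      have "(\<lambda>x. indicator (G j) x *\<^sub>R E \<omega> (ell j x))
          = (\<lambda>x. E \<omega> (c j) * (indicator (G j) x *\<^sub>R exp (- \<i> * complex_of_real (\<omega> * (g j \<bullet> x)))))"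
        by (rule ext) (simp add: E_def ell_def distrib_left algebra_simps flip: exp_add)
      note fe = this
      have "(\<integral>x. indicator (G j) x *\<^sub>R E \<omega> (ell j x) \<partial>lborel)
          = E \<omega> (c j) * (\<integral>x. indicator (G j) x *\<^sub>R exp (- \<i> * complex_of_real (\<omega> * (g j \<bullet> x))) \<partial>lborel)"
        unfolding fe by (rule integral_mult_right_zero)
      then show ?thesis using K that by (simp add: norm_mult E_def norm_exp_mi)
    qed
    then show ?thesis by blast
  qed
  then obtain Kf where Kf: "\<forall>j\<in>Jp. \<forall>\<omega>. \<omega> \<noteq> 0 \<longrightarrow> norm (\<integral>x. indicator (G j) x *\<^sub>R E \<omega> (ell j x) \<partial>lborel) \<le> Kf j / \<bar>\<omega>\<bar>"
    using bchoice[of Jp "\<lambda>j K. \<forall>\<omega>. \<omega> \<noteq> 0 \<longrightarrow> norm (\<integral>x. indicator (G j) x *\<^sub>R E \<omega> (ell j x) \<partial>lborel) \<le> K / \<bar>\<omega>\<bar>"]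
    by blast
  show ?thesis
  proof (intro exI[of _ "\<Sum>j\<in>Jp. Kf j"] allI conjI impI)
    fix \<omega> :: real
    show "integrable lborel (\<lambda>x. indicator (hit P u) x *\<^sub>R exp (- \<i> * complex_of_real (\<omega> * beta P u x)))"
      using int_main[of \<omega>] by (simp add: E_def)
    assume \<omega>: "\<omega> \<noteq> 0"
    have "norm (\<Sum>j\<in>Jp. \<integral>x. indicator (G j) x *\<^sub>R E \<omega> (ell j x) \<partial>lborel) \<le> (\<Sum>j\<in>Jp. Kf j / \<bar>\<omega>\<bar>)"
      using Kf \<omega> by (intro sum_norm_le) auto
    also have "\<dots> = (\<Sum>j\<in>Jp. Kf j) / \<bar>\<omega>\<bar>" by (simp add: sum_divide_distrib)
    finally show "norm ((\<integral>x. indicator (hit P u) x *\<^sub>R exp (- \<i> * complex_of_real (\<omega> * beta P u x)) \<partial>lborel)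
            - measure lborel (topset P u) *\<^sub>R exp (- \<i> * complex_of_real (\<omega> * topv P u))) \<le> (\<Sum>j\<in>Jp. Kf j) / \<bar>\<omega>\<bar>"
      using int_eq[of \<omega>] by (simp add: E_def t1_def)
  qed
qed

lemma deriv_aux:
  fixes \<omega> c :: real
  assumes "\<omega> \<noteq> 0"
  shows "((\<lambda>t. (\<i> / complex_of_real \<omega>) * exp (- \<i> * complex_of_real (\<omega> * (c + t))))
     has_vector_derivative exp (- \<i> * complex_of_real (\<omega> * (c + t)))) (at t within S)"
proof -
  define k where "k = - \<i> * complex_of_real \<omega>"
  have "((\<lambda>z. (\<i> / complex_of_real \<omega>) * exp (k * (complex_of_real c + z)))
     has_field_derivative (\<i> / complex_of_real \<omega>) * (exp (k * (complex_of_real c + complex_of_real t)) * k)) (at (complex_of_real t))"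
    using assms by (auto intro!: derivative_eq_intros)
  moreover have "(\<i> / complex_of_real \<omega>) * (exp (k * (complex_of_real c + complex_of_real t)) * k)
     = exp (k * (complex_of_real c + complex_of_real t))"
    using assms by (simp add: k_def field_simps)
  ultimately have "((\<lambda>z. (\<i> / complex_of_real \<omega>) * exp (k * (complex_of_real c + z)))
     has_field_derivative exp (k * (complex_of_real c + complex_of_real t))) (at (complex_of_real t))"
    by simp
  from has_vector_derivative_real_field[OF this, of S] show ?thesis by (simp add: k_def mult.assoc)
qed

lemma lineset_interval:
  fixes P :: "'a::euclidean_space set"
  assumes cp: "compact P" and cv: "convex P" and ne: "lineset P u x \<noteq> {}" and u: "u \<noteq> 0"
  shows "lineset P u x = {- hi P (-u) x .. hi P u x}" and "- hi P (-u) x \<le> hi P u x"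
proof -
  define L where "L = lineset P u x"
  have clL: "closed L"
  proof -
    have "L = (\<lambda>t. x + t *\<^sub>R u) -` P" by (auto simp: L_def lineset_def)
    then show ?thesis using compact_imp_closed[OF cp]
      by (simp add: continuous_closed_vimage continuous_intros)
  qed
  obtain B where B: "\<forall>z\<in>P. norm z \<le> B" using compact_imp_bounded[OF cp] by (auto simp: bounded_iff)
  have bdt: "\<bar>t\<bar> \<le> (B + norm x) / norm u" if "t \<in> L" for t
  proof -
    have "norm (x + t *\<^sub>R u) \<le> B" using B that by (auto simp: L_def lineset_def)
    moreover have "norm (t *\<^sub>R u) \<le> norm (x + t *\<^sub>R u) + norm x"
      using norm_triangle_ineq4[of "x + t *\<^sub>R u" x] by simp
    ultimately have "\<bar>t\<bar> * norm u \<le> B + norm x" by simp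
    then show ?thesis using u by (simp add: pos_le_divide_eq)
  qed
  have ba: "bdd_above L"
    by (rule bdd_aboveI[of _ "(B + norm x) / norm u"]) (rule abs_le_D1[OF bdt])
  have bb: "bdd_below L"
  proof (rule bdd_belowI[of _ "- ((B + norm x) / norm u)"])
    fix t assume "t \<in> L"
    from abs_le_D2[OF bdt[OF this]] show "- ((B + norm x) / norm u) \<le> t" by simp
  qed
  have neL: "L \<noteq> {}" using ne by (simp add: L_def)
  have SL: "Sup L \<in> L" by (rule closed_contains_Sup[OF neL ba clL])
  have IL: "Inf L \<in> L" by (rule closed_contains_Inf[OF neL bb clL])
  have cvL: "convex L"
    unfolding convex_def
  proof (intro ballI allI impI)
    fix s t p q :: real assume s: "s \<in> L" and t: "t \<in> L" and pq: "0 \<le> p" "0 \<le> q" "p + q = 1"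
    have "p *\<^sub>R (x + s *\<^sub>R u) + q *\<^sub>R (x + t *\<^sub>R u) \<in> P"
      using convexD[OF cv _ _ pq] s t by (auto simp: L_def lineset_def)
    moreover have "p *\<^sub>R (x + s *\<^sub>R u) + q *\<^sub>R (x + t *\<^sub>R u) = x + (p *\<^sub>R s + q *\<^sub>R t) *\<^sub>R u"
      using pq by (simp add: algebra_simps flip: scaleR_add_left)
    ultimately show "p *\<^sub>R s + q *\<^sub>R t \<in> L" by (simp add: L_def lineset_def)
  qed
  have IS: "Inf L \<le> Sup L" using cInf_le_cSup[OF neL ba bb] .
  have "L = {Inf L .. Sup L}"
  proof
    show "L \<subseteq> {Inf L .. Sup L}" using cInf_lower[OF _ bb] cSup_upper[OF _ ba] by auto
    show "{Inf L .. Sup L} \<subseteq> L"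
    proof -
      have "closed_segment (Inf L) (Sup L) \<subseteq> L" using cvL IL SL unfolding convex_contains_segment by blast
      then show ?thesis using closed_segment_eq_real_ivl1[OF IS] by simp
    qed
  qed
  moreover have "lineset P (-u) x = uminus ` L"
  proof (intro set_eqI iffI)
    fix t assume "t \<in> lineset P (-u) x"
    then have "- t \<in> L" by (simp add: L_def lineset_def)
    then show "t \<in> uminus ` L" by (metis image_eqI minus_minus)
  next
    fix t assume "t \<in> uminus ` L"
    then obtain s where "s \<in> L" "t = - s" by auto
    then show "t \<in> lineset P (-u) x" by (simp add: L_def lineset_def)
  qed
  then have "hi P (-u) x = - Inf L"
    by (simp add: hi_def Inf_real_def)
  moreover have "hi P u x = Sup L" by (simp add: hi_def L_def)
  ultimately show "lineset P u x = {- hi P (-u) x .. hi P u x}" "- hi P (-u) x \<le> hi P u x"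
    using IS by (auto simp: L_def)
qed

lemma line_integral:
  fixes P :: "'a::euclidean_space set"
  assumes cp: "compact P" and cv: "convex P" and u: "norm u = 1" and \<omega>: "\<omega> \<noteq> 0" and xs: "x \<in> slab u"
  shows "(\<integral>t. indicator P (x + t *\<^sub>R u) *\<^sub>R exp (- \<i> * complex_of_real (\<omega> * (u \<bullet> (x + t *\<^sub>R u)))) \<partial>lborel)
     = indicator (hit P u) x *\<^sub>R ((\<i> / complex_of_real \<omega>) *
         (exp (- \<i> * complex_of_real (\<omega> * beta P u x)) - exp (- \<i> * complex_of_real ((- \<omega>) * beta P (-u) x))))"
proof (cases "lineset P u x = {}")
  case True
  then have "x \<notin> hit P u" by (simp add: hit_def)
  moreover have "indicator P (x + t *\<^sub>R u) = (0::real)" for t using True by (auto simp: lineset_def)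
  ultimately show ?thesis by simp
next
  case False
  have uu: "u \<bullet> u = 1" using u by (simp add: norm_eq_1)
  have u0: "u \<noteq> 0" using u by auto
  note li = lineset_interval[OF cp cv False u0]
  define lo where "lo = - hi P (-u) x"
  define h where "h = hi P u x"
  have xh: "x \<in> hit P u" using False xs by (simp add: hit_def)
  have ind: "indicator P (x + t *\<^sub>R u) = (indicator {lo..h} t :: real)" for t
    using li(1) by (auto simp: lineset_def lo_def h_def indicator_def set_eq_iff)
  have "(\<integral>t. indicator P (x + t *\<^sub>R u) *\<^sub>R exp (- \<i> * complex_of_real (\<omega> * (u \<bullet> (x + t *\<^sub>R u)))) \<partial>lborel)
      = (\<integral>t. indicator {lo..h} t *\<^sub>R exp (- \<i> * complex_of_real (\<omega> * (u \<bullet> x + t))) \<partial>lborel)"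
    by (simp add: ind inner_add_right uu)
  also have "\<dots> = (\<i> / complex_of_real \<omega>) * exp (- \<i> * complex_of_real (\<omega> * (u \<bullet> x + h)))
                - (\<i> / complex_of_real \<omega>) * exp (- \<i> * complex_of_real (\<omega> * (u \<bullet> x + lo)))"
    apply (rule integral_FTC_atLeastAtMost[where F = "\<lambda>t. (\<i> / complex_of_real \<omega>) * exp (- \<i> * complex_of_real (\<omega> * (u \<bullet> x + t)))"])
    using li(2) apply (simp add: lo_def h_def)
     apply (rule deriv_aux[OF \<omega>])
    apply (intro continuous_intros)
    done
  also have "\<omega> * (u \<bullet> x + h) = \<omega> * beta P u x" by (simp add: h_def beta_def)
  also have "\<omega> * (u \<bullet> x + lo) = (- \<omega>) * beta P (-u) x" by (simp add: lo_def beta_def algebra_simps)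
  finally show ?thesis using xh by (simp add: right_diff_distrib)
qed

lemma hit_neg: "hit P (-u) = hit P u"
proof -
  have "slab (-u) = slab u" by (simp add: slab_def)
  moreover have "lineset P (-u) x \<noteq> {} \<longleftrightarrow> lineset P u x \<noteq> {}" for x
  proof -
    have "t \<in> lineset P (-u) x \<longleftrightarrow> - t \<in> lineset P u x" for t by (simp add: lineset_def)
    then show ?thesis by (metis equals0I equals0D minus_minus)
  qed
  ultimately show ?thesis by (simp add: hit_def)
qed

lemma phi_formula:
  fixes a :: "nat \<Rightarrow> 'a::euclidean_space" and b :: "nat \<Rightarrow> real" and u :: 'a and P :: "'a set"
  assumes P: "P = {z. \<forall>j<m. a j \<bullet> z \<le> b j}" and bdd: "bounded P" and ne: "P \<noteq> {}" and u: "norm u = 1"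
    and \<omega>: "\<omega> \<noteq> 0"
  shows "(\<integral>z. indicator P z *\<^sub>R exp (- \<i> * complex_of_real (\<omega> * (u \<bullet> z))) \<partial>lborel)
     = (\<i> / complex_of_real \<omega>) *
        ((\<integral>x. indicator (hit P u) x *\<^sub>R exp (- \<i> * complex_of_real (\<omega> * beta P u x)) \<partial>lborel)
       - (\<integral>x. indicator (hit P (-u)) x *\<^sub>R exp (- \<i> * complex_of_real ((- \<omega>) * beta P (-u) x)) \<partial>lborel))"
proof -
  have Peq: "P = (\<Inter>j\<in>{..<m}. {z. a j \<bullet> z \<le> b j})" using P by auto
  have clP: "closed P" unfolding Peq by (intro closed_INT ballI closed_halfspace_le)
  have cvP: "convex P" unfolding Peq by (intro convex_INT ballI convex_halfspace_le)
  have cpP: "compact P" using clP bdd by (simp add: compact_eq_bounded_closed)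
  have u': "norm (-u) = 1" using u by simp
  obtain K1 where K1: "\<forall>\<omega>. integrable lborel (\<lambda>x. indicator (hit P u) x *\<^sub>R exp (- \<i> * complex_of_real (\<omega> * beta P u x)))"
    using top_lemma[OF P bdd ne u] by blast
  obtain K2 where K2: "\<forall>\<omega>. integrable lborel (\<lambda>x. indicator (hit P (-u)) x *\<^sub>R exp (- \<i> * complex_of_real (\<omega> * beta P (-u) x)))"
    using top_lemma[OF P bdd ne u'] by blast
  have gi: "integrable lborel (\<lambda>z. indicator P z *\<^sub>R exp (- \<i> * complex_of_real (\<omega> * (u \<bullet> z))))"
    by (rule borel_integrable_compact[OF cpP]) (intro continuous_intros)
  have "(\<integral>z. indicator P z *\<^sub>R exp (- \<i> * complex_of_real (\<omega> * (u \<bullet> z))) \<partial>lborel)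
      = (\<integral>x. indicator (slab u) x *\<^sub>R (\<integral>t. indicator P (x + t *\<^sub>R u) *\<^sub>R exp (- \<i> * complex_of_real (\<omega> * (u \<bullet> (x + t *\<^sub>R u)))) \<partial>lborel) \<partial>lborel)"
    by (rule slab_identity[OF gi u])
  also have "\<dots> = (\<integral>x. (\<i> / complex_of_real \<omega>) *
         (indicator (hit P u) x *\<^sub>R exp (- \<i> * complex_of_real (\<omega> * beta P u x))
        - indicator (hit P (-u)) x *\<^sub>R exp (- \<i> * complex_of_real ((- \<omega>) * beta P (-u) x))) \<partial>lborel)"
  proof (intro Bochner_Integration.integral_cong refl)
    fix x
    show "indicator (slab u) x *\<^sub>R (\<integral>t. indicator P (x + t *\<^sub>R u) *\<^sub>R exp (- \<i> * complex_of_real (\<omega> * (u \<bullet> (x + t *\<^sub>R u)))) \<partial>lborel)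
      = (\<i> / complex_of_real \<omega>) *
         (indicator (hit P u) x *\<^sub>R exp (- \<i> * complex_of_real (\<omega> * beta P u x))
        - indicator (hit P (-u)) x *\<^sub>R exp (- \<i> * complex_of_real ((- \<omega>) * beta P (-u) x)))"
    proof (cases "x \<in> slab u")
      case True
      show ?thesis using line_integral[OF cpP cvP u \<omega> True]
        by (simp add: hit_neg True indicator_def)
    next
      case False
      then have "x \<notin> hit P u" by (simp add: hit_def)
      then show ?thesis using False by (simp add: hit_neg)
    qed
  qed
  also have "\<dots> = (\<i> / complex_of_real \<omega>) *
        ((\<integral>x. indicator (hit P u) x *\<^sub>R exp (- \<i> * complex_of_real (\<omega> * beta P u x)) \<partial>lborel)
       - (\<integral>x. indicator (hit P (-u)) x *\<^sub>R exp (- \<i> * complex_of_real ((- \<omega>) * beta P (-u) x)) \<partial>lborel))"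
    by (simp only: integral_mult_right_zero Bochner_Integration.integral_diff[OF K1[rule_format, of \<omega>] K2[rule_format, of "- \<omega>"]])
  finally show ?thesis .
qed

lemma area_lemma:
  fixes K :: "'a::euclidean_space set"
  assumes u: "norm u = 1" and K: "compact K" and Kc: "K \<subseteq> {z. u \<bullet> z = c}"
  shows "measure lborel {x \<in> slab u. \<exists>t. x + t *\<^sub>R u \<in> K} = facet_area u K"
proof -
  have uu: "u \<bullet> u = 1" using u by (simp add: norm_eq_1)
  define Pr where "Pr = {x + t *\<^sub>R u | x t. x \<in> K \<and> t \<in> {0..1::real}}"
  have Pr_eq: "Pr = (\<lambda>p. fst p + snd p *\<^sub>R u) ` (K \<times> {0..1})"
  proof (intro set_eqI iffI)
    fix y assume "y \<in> Pr"
    then obtain x t where "y = x + t *\<^sub>R u" "x \<in> K" "t \<in> {0..1}" by (auto simp: Pr_def)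
    then show "y \<in> (\<lambda>p. fst p + snd p *\<^sub>R u) ` (K \<times> {0..1})" by (intro image_eqI[of _ _ "(x,t)"]) auto
  next
    fix y assume "y \<in> (\<lambda>p. fst p + snd p *\<^sub>R u) ` (K \<times> {0..1})"
    then obtain x t where "y = x + t *\<^sub>R u" "x \<in> K" "t \<in> {0..1}" by auto
    then show "y \<in> Pr" unfolding Pr_def by blast
  qed
  have cPr: "compact Pr" unfolding Pr_eq
    by (intro compact_continuous_image compact_Times K compact_Icc continuous_intros)
  have PrB: "Pr \<in> sets borel" using cPr by (simp add: borel_compact)
  define Ts where "Ts = {x \<in> slab u. \<exists>t. x + t *\<^sub>R u \<in> K}"
  have TsB: "Ts \<in> sets borel"
  proof -
    have "Ts = slab u \<inter> {x. \<exists>t. x + t *\<^sub>R u \<in> K}" by (auto simp: Ts_def)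
    then have "closed Ts" by (simp add: closed_Int closed_slab closed_line_sweep K)
    then show ?thesis by (rule borel_closed)
  qed
  have gi: "integrable lborel (indicator Pr :: 'a \<Rightarrow> real)"
    using PrB emeasure_compact_finite[OF cPr] by (intro integrable_real_indicator) auto
  have inner: "(\<integral>t. indicator Pr (x + t *\<^sub>R u) \<partial>lborel) = (indicator Ts x :: real)" if xs: "x \<in> slab u" for x
  proof (cases "\<exists>t0. x + t0 *\<^sub>R u \<in> K")
    case True
    then obtain t0 where t0: "x + t0 *\<^sub>R u \<in> K" by auto
    have ct0: "u \<bullet> x + t0 = c" using Kc t0 by (auto simp: inner_add_right uu)
    have iff: "x + t *\<^sub>R u \<in> Pr \<longleftrightarrow> t \<in> {t0..t0+1}" for t
    proof
      assume "x + t *\<^sub>R u \<in> Pr"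
      then obtain y \<tau> where y: "y \<in> K" "\<tau> \<in> {0..1}" "x + t *\<^sub>R u = y + \<tau> *\<^sub>R u" by (auto simp: Pr_def)
      have "u \<bullet> (x + t *\<^sub>R u) = u \<bullet> (y + \<tau> *\<^sub>R u)" using y(3) by simp
      then have "u \<bullet> x + t = c + \<tau>" using Kc y(1) by (auto simp: inner_add_right uu)
      then show "t \<in> {t0..t0+1}" using ct0 y(2) by auto
    next
      assume t: "t \<in> {t0..t0+1}"
      have "x + t *\<^sub>R u = (x + t0 *\<^sub>R u) + (t - t0) *\<^sub>R u" by (simp add: algebra_simps)
      then show "x + t *\<^sub>R u \<in> Pr" using t t0 unfolding Pr_def by force
    qed
    have "(\<integral>t. indicator Pr (x + t *\<^sub>R u) \<partial>lborel) = (\<integral>t. indicator {t0..t0+1} t \<partial>lborel)"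
      by (intro Bochner_Integration.integral_cong refl) (simp add: indicator_def iff)
    also have "\<dots> = measure lborel {t0..t0+1}" by (simp add: Bochner_Integration.integral_indicator)
    also have "\<dots> = 1" by simp
    moreover have "x \<in> Ts" using xs t0 unfolding Ts_def by blast
    ultimately show ?thesis by simp
  next
    case False
    have "x + t *\<^sub>R u \<notin> Pr" for t
    proof
      assume "x + t *\<^sub>R u \<in> Pr"
      then obtain y \<tau> where y: "y \<in> K" "x + t *\<^sub>R u = y + \<tau> *\<^sub>R u" by (auto simp: Pr_def)
      then have "x + (t - \<tau>) *\<^sub>R u = y" by (simp add: algebra_simps)
      then show False using False y(1) by metis
    qed
    moreover have "x \<notin> Ts" using False by (simp add: Ts_def)
    ultimately show ?thesis by simp
  qed
  have "facet_area u K = measure lborel Pr"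
    using PrB by (simp add: facet_area_def Pr_def)
  also have "\<dots> = (\<integral>z. indicator Pr z \<partial>lborel)" by simp
  also have "\<dots> = (\<integral>x. indicator (slab u) x *\<^sub>R (\<integral>t. indicator Pr (x + t *\<^sub>R u) \<partial>lborel) \<partial>lborel)"
    by (rule slab_identity[OF gi u])
  also have "\<dots> = (\<integral>x. indicator Ts x \<partial>lborel)"
  proof (intro Bochner_Integration.integral_cong refl)
    fix x
    show "indicator (slab u) x *\<^sub>R (\<integral>t. indicator Pr (x + t *\<^sub>R u) \<partial>lborel) = (indicator Ts x :: real)"
    proof (cases "x \<in> slab u")
      case True
      then show ?thesis using inner[OF True] by simp
    next
      case False
      then have "x \<notin> Ts" by (simp add: Ts_def)
      then show ?thesis using False by simp
    qed
  qed
  also have "\<dots> = measure lborel Ts" by simp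
  finally show ?thesis by (simp add: Ts_def)
qed

lemma lowdim_area_zero:
  fixes P F :: "'a::euclidean_space set"
  assumes cv: "convex P" and aP: "aff_dim P = int DIM('a)" and fa: "F face_of P" and FP: "F \<noteq> P"
    and Fne: "F \<noteq> {}" and nf: "\<not> F facet_of P"
  shows "facet_area u F = 0"
proof -
  have "aff_dim F < aff_dim P" by (rule face_of_aff_dim_lt[OF cv fa FP])
  moreover have "aff_dim F \<noteq> aff_dim P - 1" using nf fa Fne by (auto simp: facet_of_def)
  ultimately have lt: "aff_dim F + 1 < int DIM('a)" using aP by linarith
  obtain p where p: "p \<in> F" using Fne by auto
  define A where "A = affine hull (insert (p + u) F)"
  have "aff_dim A \<le> aff_dim F + 1" by (simp add: A_def aff_dim_insert)
  then have "aff_dim A \<noteq> int DIM('a)" using lt by linarith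
  then have "interior A = {}" using aff_dim_nonempty_interior by blast
  then have negA: "negligible A"
    using negligible_convex_interior[OF affine_imp_convex[OF affine_affine_hull[of "insert (p + u) F"]]] by (simp add: A_def)
  have sub: "{x + t *\<^sub>R u | x t. x \<in> F \<and> t \<in> {0..1::real}} \<subseteq> A"
  proof clarify
    fix x and t :: real assume x: "x \<in> F"
    have "x \<in> A" "p + u \<in> A" "p \<in> A" using x p by (auto simp: A_def hull_inc)
    from mem_affine_3_minus[OF affine_affine_hull[of "insert (p + u) F"], of x "p + u" p t] this
    show "x + t *\<^sub>R u \<in> A" by (simp add: A_def)
  qed
  have "negligible {x + t *\<^sub>R u | x t. x \<in> F \<and> t \<in> {0..1::real}}"
    by (rule negligible_subset[OF negA sub])
  then show ?thesis by (simp add: facet_area_def negligible_imp_measure0)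
qed

lemma orth_facet_cases:
  fixes P F :: "'a::euclidean_space set"
  assumes poly: "polyhedron P" and Fa: "F facet_of P" and orth: "orth_to s F" and s: "s \<noteq> 0"
    and aP: "aff_dim P = int DIM('a)"
  shows "\<exists>c. F = P \<inter> {z. s \<bullet> z = c} \<and> ((\<forall>z\<in>P. s \<bullet> z \<le> c) \<or> (\<forall>z\<in>P. c \<le> s \<bullet> z))"
proof -
  obtain a b where a: "a \<noteq> 0" and Pa: "P \<subseteq> {x. a \<bullet> x \<le> b}" and Feq: "F = P \<inter> {x. a \<bullet> x = b}"
    using facet_of_polyhedron[OF poly Fa] by blast
  have Fne: "F \<noteq> {}" and adF: "aff_dim F = aff_dim P - 1" using Fa by (auto simp: facet_of_def)
  obtain p where p: "p \<in> F" using Fne by auto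
  define c where "c = s \<bullet> p"
  define H where "H = {z. s \<bullet> z = c}"
  have FH: "F \<subseteq> H"
  proof
    fix x assume "x \<in> F"
    then have "s \<bullet> (x - p) = 0" using orth p by (auto simp: orth_to_def)
    then show "x \<in> H" by (simp add: H_def c_def inner_diff_right)
  qed
  have hFH: "affine hull F \<subseteq> H" using FH by (intro hull_minimal) (auto simp: H_def affine_hyperplane)
  have "affine hull F = H"
  proof (rule affine_dim_equal)
    show "affine (affine hull F)" by simp
    show "affine H" by (simp add: H_def affine_hyperplane)
    show "affine hull F \<noteq> {}" using Fne by simp
    show "affine hull F \<subseteq> H" by (rule hFH)
    show "aff_dim (affine hull F) = aff_dim H" using adF aP s by (simp add: H_def)
  qed
  moreover have "affine hull F \<subseteq> {x. a \<bullet> x = b}"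
    using Feq by (intro hull_minimal) (auto simp: affine_hyperplane)
  ultimately have Hab: "H \<subseteq> {x. a \<bullet> x = b}" by simp
  have ss: "s \<bullet> s \<noteq> 0" using s by simp
  define \<kappa> where "\<kappa> = (a \<bullet> s) / (s \<bullet> s)"
  define a' where "a' = a - \<kappa> *\<^sub>R s"
  have sa': "s \<bullet> a' = 0" using ss by (simp add: a'_def \<kappa>_def inner_diff_right inner_commute)
  have "p + a' \<in> H" using p FH sa' by (auto simp: H_def inner_add_right)
  then have "a \<bullet> (p + a') = b" using Hab by auto
  moreover have "a \<bullet> p = b" using p Feq by auto
  ultimately have aa': "a \<bullet> a' = 0" by (simp add: inner_add_right)
  have "a' \<bullet> a' = a \<bullet> a' - \<kappa> * (s \<bullet> a')" by (simp add: a'_def inner_diff_left)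
  then have "a' \<bullet> a' = 0" using aa' sa' by simp
  then have "a' = 0" by simp
  then have aeq: "a = \<kappa> *\<^sub>R s" by (simp add: a'_def)
  have k0: "\<kappa> \<noteq> 0" using a aeq by auto
  have bc: "b = \<kappa> * c" using \<open>a \<bullet> p = b\<close> aeq by (simp add: c_def)
  have F2: "F = P \<inter> {z. s \<bullet> z = c}" using Feq aeq bc k0 by auto
  have side: "(\<forall>z\<in>P. s \<bullet> z \<le> c) \<or> (\<forall>z\<in>P. c \<le> s \<bullet> z)"
  proof (cases "\<kappa> > 0")
    case True
    have "s \<bullet> z \<le> c" if "z \<in> P" for z
    proof -
      have "\<kappa> * (s \<bullet> z) \<le> \<kappa> * c" using Pa that aeq bc by auto
      then show ?thesis using True by simp
    qed
    then show ?thesis by blast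
  next
    case False
    then have kn: "\<kappa> < 0" using k0 by simp
    have "c \<le> s \<bullet> z" if "z \<in> P" for z
    proof -
      have "\<kappa> * (s \<bullet> z) \<le> \<kappa> * c" using Pa that aeq bc by auto
      then show ?thesis using kn by (simp add: mult_le_cancel_left)
    qed
    then show ?thesis by blast
  qed
  show ?thesis using F2 side by blast
qed

theorem theorem1:
  fixes P :: "'a::euclidean_space set" and s :: 'a
  assumes "polytope P" and "aff_dim P = int DIM('a)" and "s \<noteq> 0"
  shows "(\<lambda>l. phi P s l
            - (\<i> / complex_of_real (norm s)) *
              (\<Sum>F\<in>{F. F facet_of P \<and> orth_to s F}.
                  complex_of_real (facet_sgn P F s * facet_area (s /\<^sub>R norm s) F)
                  * exp (- \<i> * complex_of_real ((1 / l) * (s \<bullet> facet_point F))))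
              * complex_of_real l)
         \<in> O[at_right (0::real)](\<lambda>l. complex_of_real (l\<^sup>2))"
proof -
  note aP = assms(2)
  have poly: "polyhedron P" using assms(1) by (rule polytope_imp_polyhedron)
  have cpP: "compact P" using assms(1) by (rule polytope_imp_compact)
  have cvP: "convex P" using assms(1) by (rule polytope_imp_convex)
  have bdP: "bounded P" using cpP by (rule compact_imp_bounded)
  have neP: "P \<noteq> {}" using aP by auto
  obtain FF where FF: "finite FF" "P = \<Inter>FF" "\<forall>h\<in>FF. \<exists>a b. a \<noteq> 0 \<and> h = {x. a \<bullet> x \<le> b}"
    using poly by (auto simp: polyhedron_def)
  obtain A Bv where AB: "\<forall>h\<in>FF. h = {x. A h \<bullet> x \<le> Bv h}"
    using FF(3) by metis
  obtain f where f: "bij_betw f {0..<card FF} FF" using ex_bij_betw_nat_finite[OF FF(1)] by blast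
  define m where "m = card FF"
  define a where "a j = A (f j)" for j
  define b where "b j = Bv (f j)" for j
  have img: "f ` {0..<m} = FF" using f by (simp add: bij_betw_def m_def)
  have Prep: "P = {z. \<forall>j<m. a j \<bullet> z \<le> b j}"
  proof -
    have mem: "z \<in> f j \<longleftrightarrow> a j \<bullet> z \<le> b j" if j: "j < m" for j z
    proof -
      have "f j \<in> FF" using img j by auto
      then have eq: "f j = {x. A (f j) \<bullet> x \<le> Bv (f j)}" using AB by blast
      show ?thesis by (subst eq) (simp add: a_def b_def)
    qed
    have "z \<in> P \<longleftrightarrow> (\<forall>j<m. a j \<bullet> z \<le> b j)" for z
    proof -
      have "z \<in> P \<longleftrightarrow> (\<forall>h\<in>f ` {0..<m}. z \<in> h)" using FF(2) img by auto
      also have "\<dots> \<longleftrightarrow> (\<forall>j<m. z \<in> f j)" by auto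
      also have "\<dots> \<longleftrightarrow> (\<forall>j<m. a j \<bullet> z \<le> b j)" using mem by auto
      finally show ?thesis .
    qed
    then show ?thesis by auto
  qed
  define u where "u = s /\<^sub>R norm s"
  have ns: "norm s > 0" using assms(3) by simp
  have u1: "norm u = 1" using ns by (simp add: u_def)
  have u1': "norm (-u) = 1" using u1 by simp
  have su: "s \<bullet> z = norm s * (u \<bullet> z)" for z using ns by (simp add: u_def)
  have cont: "continuous_on P (\<lambda>z. u \<bullet> z)" by (intro continuous_intros)
  obtain zs where zs: "zs \<in> P" "\<forall>z\<in>P. u \<bullet> z \<le> u \<bullet> zs"
    using continuous_attains_sup[OF cpP neP cont] by blast
  obtain zb where zb: "zb \<in> P" "\<forall>z\<in>P. u \<bullet> zb \<le> u \<bullet> z"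
    using continuous_attains_inf[OF cpP neP cont] by blast
  define t1 where "t1 = u \<bullet> zs"
  define t0 where "t0 = u \<bullet> zb"
  have topv1: "topv P u = t1" unfolding topv_def t1_def by (rule cSup_eq_maximum) (use zs in auto)
  have topv0: "topv P (-u) = - t0" unfolding topv_def t0_def by (rule cSup_eq_maximum) (use zb in auto)
  have t01: "t0 < t1"
  proof (rule ccontr)
    assume "\<not> t0 < t1"
    then have "P \<subseteq> {z. u \<bullet> z = t1}" using zs zb by (force simp: t0_def t1_def)
    then have "aff_dim P \<le> aff_dim {z. u \<bullet> z = t1}" by (rule aff_dim_subset)
    moreover have "u \<noteq> 0" using u1 by auto
    ultimately show False using aP by simp
  qed
  define T where "T = P \<inter> {z. u \<bullet> z = t1}"
  define Bf where "Bf = P \<inter> {z. u \<bullet> z = t0}"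
  have zsT: "zs \<in> T" and zbB: "zb \<in> Bf" using zs zb by (auto simp: T_def Bf_def t1_def t0_def)
  have TB: "T \<noteq> Bf" using zsT t01 by (auto simp: Bf_def T_def)
  have faceT: "T face_of P" unfolding T_def
    by (rule face_of_Int_supporting_hyperplane_le[OF cvP]) (use zs in \<open>auto simp: t1_def\<close>)
  have faceB: "Bf face_of P" unfolding Bf_def
    by (rule face_of_Int_supporting_hyperplane_ge[OF cvP]) (use zb in \<open>auto simp: t0_def\<close>)
  have TP: "T \<noteq> P" using zb t01 by (auto simp: T_def t0_def)
  have BP: "Bf \<noteq> P" using zs t01 by (auto simp: Bf_def t1_def)
  have cT: "compact T" unfolding T_def by (intro compact_Int_closed cpP closed_hyperplane)
  have cB: "compact Bf" unfolding Bf_def by (intro compact_Int_closed cpP closed_hyperplane)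
  have AT: "measure lborel (topset P u) = facet_area u T"
  proof -
    have "topset P u = {x \<in> slab u. \<exists>t. x + t *\<^sub>R u \<in> T}" by (auto simp: topset_def topv1 T_def)
    moreover have "measure lborel {x \<in> slab u. \<exists>t. x + t *\<^sub>R u \<in> T} = facet_area u T"
      by (rule area_lemma[OF u1 cT, of t1]) (auto simp: T_def)
    ultimately show ?thesis by simp
  qed
  have AB': "measure lborel (topset P (-u)) = facet_area u Bf"
  proof -
    have sl: "slab (-u) = slab u" by (simp add: slab_def)
    have "(\<exists>t. x + t *\<^sub>R (-u) \<in> P \<and> (-u) \<bullet> (x + t *\<^sub>R (-u)) = - t0) \<longleftrightarrow> (\<exists>t. x + t *\<^sub>R u \<in> Bf)" for x
    proof
      assume "\<exists>t. x + t *\<^sub>R (-u) \<in> P \<and> (-u) \<bullet> (x + t *\<^sub>R (-u)) = - t0"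
      then obtain t where t: "x + t *\<^sub>R (-u) \<in> P" "(-u) \<bullet> (x + t *\<^sub>R (-u)) = - t0" by blast
      have e: "x + t *\<^sub>R (-u) = x + (-t) *\<^sub>R u" by simp
      have "x + (-t) *\<^sub>R u \<in> Bf" using t unfolding e Bf_def by (simp add: inner_minus_left)
      then show "\<exists>t. x + t *\<^sub>R u \<in> Bf" by blast
    next
      assume "\<exists>t. x + t *\<^sub>R u \<in> Bf"
      then obtain t where t: "x + t *\<^sub>R u \<in> P" "u \<bullet> (x + t *\<^sub>R u) = t0" by (auto simp: Bf_def)
      have e: "x + (-t) *\<^sub>R (-u) = x + t *\<^sub>R u" by simp
      have "x + (-t) *\<^sub>R (-u) \<in> P \<and> (-u) \<bullet> (x + (-t) *\<^sub>R (-u)) = - t0"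
        unfolding e using t by (simp add: inner_minus_left)
      then show "\<exists>t. x + t *\<^sub>R (-u) \<in> P \<and> (-u) \<bullet> (x + t *\<^sub>R (-u)) = - t0" by blast
    qed
    then have "topset P (-u) = {x \<in> slab u. \<exists>t. x + t *\<^sub>R u \<in> Bf}"
      unfolding topset_def topv0 sl by blast
    moreover have "measure lborel {x \<in> slab u. \<exists>t. x + t *\<^sub>R u \<in> Bf} = facet_area u Bf"
      by (rule area_lemma[OF u1 cB, of t0]) (auto simp: Bf_def)
    ultimately show ?thesis by simp
  qed
  have AT0: "facet_area u T = 0" if "\<not> T facet_of P"
    by (rule lowdim_area_zero[OF cvP aP faceT TP _ that]) (use zsT in auto)
  have AB0: "facet_area u Bf = 0" if "\<not> Bf facet_of P"
    by (rule lowdim_area_zero[OF cvP aP faceB BP _ that]) (use zbB in auto)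
  have facet_cases: "F = T \<or> F = Bf" if Fa: "F facet_of P" and Fo: "orth_to s F" for F
  proof -
    obtain c where c: "F = P \<inter> {z. s \<bullet> z = c}" and side: "(\<forall>z\<in>P. s \<bullet> z \<le> c) \<or> (\<forall>z\<in>P. c \<le> s \<bullet> z)"
      using orth_facet_cases[OF poly Fa Fo assms(3) aP] by blast
    have "F \<noteq> {}" using Fa by (simp add: facet_of_def)
    then obtain q where q: "q \<in> P" "s \<bullet> q = c" using c by auto
    from side show ?thesis
    proof
      assume le: "\<forall>z\<in>P. s \<bullet> z \<le> c"
      have c1: "norm s * t1 \<le> c" using le zs su by (auto simp: t1_def)
      have "u \<bullet> q \<le> t1" using zs q by (auto simp: t1_def)
      then have "norm s * (u \<bullet> q) \<le> norm s * t1" using ns by simp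
      then have "c = norm s * t1" using c1 q su by auto
      then have "F = T" using c ns by (auto simp: T_def su)
      then show ?thesis by simp
    next
      assume ge: "\<forall>z\<in>P. c \<le> s \<bullet> z"
      have c0: "c \<le> norm s * t0" using ge zb su by (auto simp: t0_def)
      have "t0 \<le> u \<bullet> q" using zb q by (auto simp: t0_def)
      then have "norm s * t0 \<le> norm s * (u \<bullet> q)" using ns by simp
      then have "c = norm s * t0" using c0 q su by auto
      then have "F = Bf" using c ns by (auto simp: Bf_def su)
      then show ?thesis by simp
    qed
  qed
  have orthT: "orth_to s T" by (auto simp: orth_to_def T_def inner_diff_right su)
  have orthB: "orth_to s Bf" by (auto simp: orth_to_def Bf_def inner_diff_right su)
  have Fset: "{F. F facet_of P \<and> orth_to s F} = {F. F = T \<and> T facet_of P} \<union> {F. F = Bf \<and> Bf facet_of P}"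
    using facet_cases orthT orthB by auto
  have fpT: "facet_point T \<in> T" unfolding facet_point_def by (rule someI_ex) (use zsT in blast)
  have fpB: "facet_point Bf \<in> Bf" unfolding facet_point_def by (rule someI_ex) (use zbB in blast)
  have sfpT: "s \<bullet> facet_point T = norm s * t1" using fpT by (simp add: T_def su)
  have sfpB: "s \<bullet> facet_point Bf = norm s * t0" using fpB by (simp add: Bf_def su)
  have sgnT: "facet_sgn P T s = 1"
  proof -
    have "\<forall>x\<in>P. s \<bullet> x \<le> s \<bullet> facet_point T"
    proof
      fix x assume "x \<in> P"
      then have "u \<bullet> x \<le> t1" using zs by (simp add: t1_def)
      then have "norm s * (u \<bullet> x) \<le> norm s * t1" using ns by simp
      then show "s \<bullet> x \<le> s \<bullet> facet_point T" using sfpT su[of x] by linarith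
    qed
    then show ?thesis by (simp add: facet_sgn_def)
  qed
  have sgnB: "facet_sgn P Bf s = -1"
  proof -
    have "norm s * t0 < norm s * t1" using t01 ns by simp
    then have "s \<bullet> zs > s \<bullet> facet_point Bf" using sfpB su[of zs] by (simp add: t1_def)
    then have "\<not> (\<forall>x\<in>P. s \<bullet> x \<le> s \<bullet> facet_point Bf)" using zs by force
    then show ?thesis by (simp add: facet_sgn_def)
  qed
  define ET where "ET l = exp (- \<i> * complex_of_real ((norm s / l) * t1))" for l
  define EB where "EB l = exp (- \<i> * complex_of_real ((norm s / l) * t0))" for l
  have sum_eq: "(\<Sum>F\<in>{F. F facet_of P \<and> orth_to s F}.
                  complex_of_real (facet_sgn P F s * facet_area (s /\<^sub>R norm s) F)
                  * exp (- \<i> * complex_of_real ((1 / l) * (s \<bullet> facet_point F))))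
      = complex_of_real (facet_area u T) * ET l - complex_of_real (facet_area u Bf) * EB l" for l
  proof -
    define \<tau> where "\<tau> F = complex_of_real (facet_sgn P F s * facet_area (s /\<^sub>R norm s) F)
                  * exp (- \<i> * complex_of_real ((1 / l) * (s \<bullet> facet_point F)))" for F
    have \<tau>T: "\<tau> T = complex_of_real (facet_area u T) * ET l"
      by (simp add: \<tau>_def sgnT sfpT ET_def u_def[symmetric])
    have \<tau>B: "\<tau> Bf = - (complex_of_real (facet_area u Bf) * EB l)"
      by (simp add: \<tau>_def sgnB sfpB EB_def u_def[symmetric])
    have "(\<Sum>F\<in>{F. F facet_of P \<and> orth_to s F}. \<tau> F)
        = complex_of_real (facet_area u T) * ET l - complex_of_real (facet_area u Bf) * EB l"
    proof (cases "T facet_of P"; cases "Bf facet_of P")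
      assume "T facet_of P" "Bf facet_of P"
      then have e: "{F. F facet_of P \<and> orth_to s F} = {T, Bf}" unfolding Fset by auto
      show ?thesis unfolding e using TB \<tau>T \<tau>B by simp
    next
      assume "T facet_of P" "\<not> Bf facet_of P"
      then have e: "{F. F facet_of P \<and> orth_to s F} = {T}" unfolding Fset by auto
      show ?thesis unfolding e using \<tau>T AB0 \<open>\<not> Bf facet_of P\<close> by simp
    next
      assume "\<not> T facet_of P" "Bf facet_of P"
      then have e: "{F. F facet_of P \<and> orth_to s F} = {Bf}" unfolding Fset by auto
      show ?thesis unfolding e using \<tau>B AT0 \<open>\<not> T facet_of P\<close> by simp
    next
      assume "\<not> T facet_of P" "\<not> Bf facet_of P"
      then have e: "{F. F facet_of P \<and> orth_to s F} = {}" unfolding Fset by auto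
      show ?thesis unfolding e using AB0 AT0 \<open>\<not> T facet_of P\<close> \<open>\<not> Bf facet_of P\<close> by simp
    qed
    then show ?thesis by (simp add: \<tau>_def)
  qed
  obtain K1 where K1: "\<forall>\<omega>. integrable lborel (\<lambda>x. indicator (hit P u) x *\<^sub>R exp (- \<i> * complex_of_real (\<omega> * beta P u x)))
      \<and> (\<omega> \<noteq> 0 \<longrightarrow> norm ((\<integral>x. indicator (hit P u) x *\<^sub>R exp (- \<i> * complex_of_real (\<omega> * beta P u x)) \<partial>lborel)
            - measure lborel (topset P u) *\<^sub>R exp (- \<i> * complex_of_real (\<omega> * topv P u))) \<le> K1 / \<bar>\<omega>\<bar>)"
    using top_lemma[OF Prep bdP neP u1] by blast
  obtain K2 where K2: "\<forall>\<omega>. integrable lborel (\<lambda>x. indicator (hit P (-u)) x *\<^sub>R exp (- \<i> * complex_of_real (\<omega> * beta P (-u) x)))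
      \<and> (\<omega> \<noteq> 0 \<longrightarrow> norm ((\<integral>x. indicator (hit P (-u)) x *\<^sub>R exp (- \<i> * complex_of_real (\<omega> * beta P (-u) x)) \<partial>lborel)
            - measure lborel (topset P (-u)) *\<^sub>R exp (- \<i> * complex_of_real (\<omega> * topv P (-u)))) \<le> K2 / \<bar>\<omega>\<bar>)"
    using top_lemma[OF Prep bdP neP u1'] by blast
  show ?thesis
  proof (rule bigoI[where c = "(K1 + K2) / (norm s)\<^sup>2"])
    show "\<forall>\<^sub>F l in at_right 0. norm (phi P s l
            - (\<i> / complex_of_real (norm s)) *
              (\<Sum>F\<in>{F. F facet_of P \<and> orth_to s F}.
                  complex_of_real (facet_sgn P F s * facet_area (s /\<^sub>R norm s) F)
                  * exp (- \<i> * complex_of_real ((1 / l) * (s \<bullet> facet_point F))))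
              * complex_of_real l) \<le> (K1 + K2) / (norm s)\<^sup>2 * norm (complex_of_real (l\<^sup>2))"
      using eventually_at_right_less[of "0::real"]
    proof (rule eventually_mono)
      fix l :: real assume l: "0 < l"
      define \<omega> where "\<omega> = norm s / l"
      have \<omega>0: "\<omega> > 0" using l ns by (simp add: \<omega>_def)
      define F1 where "F1 = (\<integral>x. indicator (hit P u) x *\<^sub>R exp (- \<i> * complex_of_real (\<omega> * beta P u x)) \<partial>lborel)"
      define F2 where "F2 = (\<integral>x. indicator (hit P (-u)) x *\<^sub>R exp (- \<i> * complex_of_real ((- \<omega>) * beta P (-u) x)) \<partial>lborel)"
      define e1 where "e1 = F1 - complex_of_real (facet_area u T) * ET l"
      define e2 where "e2 = F2 - complex_of_real (facet_area u Bf) * EB l"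
      have ETw: "ET l = exp (- \<i> * complex_of_real (\<omega> * topv P u))" by (simp add: ET_def \<omega>_def topv1)
      have EBw: "EB l = exp (- \<i> * complex_of_real ((- \<omega>) * topv P (-u)))" by (simp add: EB_def \<omega>_def topv0)
      have ne1: "norm e1 \<le> K1 / \<omega>"
        using conjunct2[OF K1[rule_format, of \<omega>]] \<omega>0
        unfolding e1_def F1_def ETw AT[symmetric] scaleR_conv_of_real by simp
      have ne2: "norm e2 \<le> K2 / \<omega>"
        using conjunct2[OF K2[rule_format, of "- \<omega>"]] \<omega>0
        unfolding e2_def F2_def EBw AB'[symmetric] scaleR_conv_of_real by simp
      have ip: "integrable lborel (\<lambda>z. indicator P z *\<^sub>R exp (- \<i> * complex_of_real (\<omega> * (u \<bullet> z))))"
        by (rule borel_integrable_compact[OF cpP]) (intro continuous_intros)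
      have phi_eq: "phi P s l = (\<integral>z. indicator P z *\<^sub>R exp (- \<i> * complex_of_real (\<omega> * (u \<bullet> z))) \<partial>lborel)"
      proof -
        have "phi P s l = integral P (\<lambda>z. exp (- \<i> * complex_of_real (\<omega> * (u \<bullet> z))))"
          unfolding phi_def by (intro integral_cong) (simp add: \<omega>_def su)
        also have "\<dots> = (\<integral>z. indicator P z *\<^sub>R exp (- \<i> * complex_of_real (\<omega> * (u \<bullet> z))) \<partial>lborel)"
          using set_borel_integral_eq_integral(2)[of P "\<lambda>z. exp (- \<i> * complex_of_real (\<omega> * (u \<bullet> z)))"] ip
          by (simp add: set_integrable_def set_lebesgue_integral_def)
        finally show ?thesis .
      qed
      have pf: "phi P s l = (\<i> / complex_of_real \<omega>) * (F1 - F2)"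
        using phi_formula[OF Prep bdP neP u1, of \<omega>] \<omega>0 phi_eq by (simp add: F1_def F2_def)
      have diff: "phi P s l
            - (\<i> / complex_of_real (norm s)) *
              (\<Sum>F\<in>{F. F facet_of P \<and> orth_to s F}.
                  complex_of_real (facet_sgn P F s * facet_area (s /\<^sub>R norm s) F)
                  * exp (- \<i> * complex_of_real ((1 / l) * (s \<bullet> facet_point F))))
              * complex_of_real l = (\<i> / complex_of_real \<omega>) * (e1 - e2)"
        unfolding sum_eq pf e1_def e2_def using l ns
        by (simp add: \<omega>_def field_simps)
      have "norm ((\<i> / complex_of_real \<omega>) * (e1 - e2)) = norm (e1 - e2) / \<omega>"
        using \<omega>0 by (simp add: norm_mult norm_divide)
      also have "\<dots> \<le> (norm e1 + norm e2) / \<omega>"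
        using \<omega>0 by (intro divide_right_mono norm_triangle_ineq4) auto
      also have "\<dots> \<le> (K1 / \<omega> + K2 / \<omega>) / \<omega>"
        using \<omega>0 ne1 ne2 by (intro divide_right_mono add_mono) auto
      also have "\<dots> = (K1 + K2) / (norm s)\<^sup>2 * norm (complex_of_real (l\<^sup>2))"
      proof -
        have "norm (complex_of_real (l\<^sup>2)) = l\<^sup>2" by (simp only: norm_of_real) simp
        then show ?thesis using l ns by (simp add: \<omega>_def field_simps power2_eq_square)
      qed
      finally show "norm (phi P s l
            - (\<i> / complex_of_real (norm s)) *
              (\<Sum>F\<in>{F. F facet_of P \<and> orth_to s F}.
                  complex_of_real (facet_sgn P F s * facet_area (s /\<^sub>R norm s) F)
                  * exp (- \<i> * complex_of_real ((1 / l) * (s \<bullet> facet_point F))))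
              * complex_of_real l) \<le> (K1 + K2) / (norm s)\<^sup>2 * norm (complex_of_real (l\<^sup>2))"
        unfolding diff .
    qed
  qed
qed

end
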